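(* Let $\alpha\in[0,1]$ and assume (H1). Let $C^{init}\in X_\alpha^+$ and assume there exists $U\in\mathcal K_1\cup\mathcal K_2$ such that $\sum_{i\ge1}U(i^\alpha)C_i^{init}<+\infty$. Then there exists at least one solution $C\in\mathcal C^0([0,+\infty),X_\alpha^+)$ of the system on $[0,+\infty)$ with $C(0)=C^{init}$, and for each $T\in(0,+\infty)$, $$\sup_{t\in[0,T]}\sum_{i\ge1}U(i^\alpha)C_i(t)<+\infty.$$
   Context: Let $\lambda\ge 0$ and let $(a_i)_{i\ge1}$, $(b_i)_{i\ge1}$ be sequences of nonnegative real numbers. Consider the infinite system of ODEs $\frac{d}{dt}C_1=\lambda-\sum_{j\ge1}a_jC_1C_j-a_1C_1^2$, $\frac{d}{dt}C_i=J_{i-1}-J_i$ for $i\ge2$, where $J_i=a_iC_1C_i-b_{i+1}C_{i+1}$ for $i\ge1$. For $T\in(0,+\infty]$, a solution on $[0,T)$ is a sequence $C=(C_i)_{i\ge1}$ of nonnegative functions on $[0,T)$ such that for every $t\in(0,T)$: each $C_i$ is continuous on $[0,t]$, $\sum_{j\ge1}a_jC_j\in L^1(0,t)$, and $C_1(t)=C_1(0)+\lambda t-\int_0^t\big(C_1(s)\sum_{j\ge1}a_jC_j(s)+a_1C_1(s)^2\big)ds$, $C_i(t)=C_i(0)+\int_0^t(J_{i-1}(s)-J_i(s))ds$ for $i\ge2$. For $\alpha\ge0$, $X_\alpha=\{x=(x_k)_{k\ge1}\in\mathbb R^{\mathbb N^*}:\|x\|_{X_\alpha}:=\sum_{k\ge1}k^\alpha|x_k|<\infty\}$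 and $X_\alpha^+$ is its cone of nonnegative sequences. (H1): there exists $a\ge0$ such that $0\le a_i\le a\,i^\alpha$ and $b_i\ge0$ for all $i\ge1$. $\mathcal K_1$ is the set of $U\in C^1([0,\infty))\cap W^{2,\infty}_{loc}(0,\infty)$ with $U\ge0$, $U$ convex, $U(0)=0$, $U'(0)\ge0$ and $U'$ concave. $\mathcal K_2$ is the set of $U\in C^2([0,\infty),\mathbb R_+)$ with $U(0)=U'(0)=0$, $U'$ convex, and satisfying the $\Delta_2$-condition: there is $k_U>0$ with $U'(2r)\le k_UU'(r)$ for all $r\ge0$. *)

theory Defs
  imports "HOL-Analysis.Analysis"
begin

text \<open>Sequences x = (x_k)_{k>=1} are modelled as functions nat => real; the value at
  index 0 is irrelevant and ignored. A time-dependent sequence C is a function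
  real => nat => real, C t i being C_i(t).\<close>

definition Xnorm :: "real \<Rightarrow> (nat \<Rightarrow> real) \<Rightarrow> real" where
  "Xnorm \<alpha> x = (\<Sum>\<^sub>\<infinity>k\<in>{1..}. real k powr \<alpha> * \<bar>x k\<bar>)"

definition in_X :: "real \<Rightarrow> (nat \<Rightarrow> real) \<Rightarrow> bool" where
  "in_X \<alpha> x \<longleftrightarrow> (\<lambda>k. real k powr \<alpha> * \<bar>x k\<bar>) summable_on {1..}"

definition in_Xplus :: "real \<Rightarrow> (nat \<Rightarrow> real) \<Rightarrow> bool" where
  "in_Xplus \<alpha> x \<longleftrightarrow> in_X \<alpha> x \<and> (\<forall>k\<ge>1. x k \<ge> 0)"

definition flux :: "(nat \<Rightarrow> real) \<Rightarrow> (nat \<Rightarrow> real) \<Rightarrow> (nat \<Rightarrow> real) \<Rightarrow> nat \<Rightarrow> real" where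
  "flux a b c i = a i * c 1 * c i - b (i + 1) * c (i + 1)"

definition asum :: "(nat \<Rightarrow> real) \<Rightarrow> (nat \<Rightarrow> real) \<Rightarrow> real" where
  "asum a c = (\<Sum>\<^sub>\<infinity>j\<in>{1..}. a j * c j)"

definition is_solution_global ::
  "real \<Rightarrow> (nat \<Rightarrow> real) \<Rightarrow> (nat \<Rightarrow> real) \<Rightarrow> (real \<Rightarrow> nat \<Rightarrow> real) \<Rightarrow> bool" where
  "is_solution_global lam a b C \<longleftrightarrow>
     (\<forall>t\<ge>0. \<forall>i\<ge>1. C t i \<ge> 0) \<and>
     (\<forall>t>0.
        (\<forall>i\<ge>1. continuous_on {0..t} (\<lambda>s. C s i)) \<and>
        (\<forall>s\<in>{0..t}. (\<lambda>j. a j * C s j) summable_on {1..}) \<and>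
        set_integrable lborel {0..t} (\<lambda>s. asum a (C s)) \<and>
        C t 1 = C 0 1 + lam * t
           - (LINT s:{0..t}|lborel. C s 1 * asum a (C s) + a 1 * (C s 1)\<^sup>2) \<and>
        (\<forall>i\<ge>2. C t i = C 0 i
           + (LINT s:{0..t}|lborel. flux a b (C s) (i - 1) - flux a b (C s) i)))"

text \<open>The class K_1. C^1 on [0,oo) via a continuous one-sided derivative; W^{2,oo}_loc(0,oo)
  means U' is Lipschitz on every compact subinterval of (0,oo).\<close>
definition K1 :: "(real \<Rightarrow> real) \<Rightarrow> bool" where
  "K1 U \<longleftrightarrow> (\<exists>U'.
      continuous_on {0..} U' \<and>
      (\<forall>x\<ge>0. (U has_real_derivative U' x) (at x within {0..})) \<and>
      (\<forall>x y. 0 < x \<longrightarrow> x \<le> y \<longrightarrow> (\<exists>L. L-lipschitz_on {x..y} U')) \<and>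
      (\<forall>x\<ge>0. U x \<ge> 0) \<and> convex_on {0..} U \<and> U 0 = 0 \<and> U' 0 \<ge> 0 \<and>
      concave_on {0..} U')"

definition K2 :: "(real \<Rightarrow> real) \<Rightarrow> bool" where
  "K2 U \<longleftrightarrow> (\<exists>U' U''.
      (\<forall>x\<ge>0. (U has_real_derivative U' x) (at x within {0..})) \<and>
      (\<forall>x\<ge>0. (U' has_real_derivative U'' x) (at x within {0..})) \<and>
      continuous_on {0..} U'' \<and>
      (\<forall>x\<ge>0. U x \<ge> 0) \<and> U 0 = 0 \<and> U' 0 = 0 \<and> convex_on {0..} U' \<and>
      (\<exists>k>0. \<forall>r\<ge>0. U' (2 * r) \<le> k * U' r))"

end

theory Submission
  imports Defs "HOL-Library.Diagonal_Subsequence"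
begin

definition goodU :: "(real \<Rightarrow> real) \<Rightarrow> (real \<Rightarrow> real) \<Rightarrow> bool" where
  "goodU U U' \<longleftrightarrow> (\<forall>x\<ge>0. (U has_real_derivative U' x) (at x within {0..})) \<and>
     (\<forall>x\<ge>0. U x \<ge> 0) \<and> U 0 = 0 \<and> (\<forall>x y. 0 < x \<longrightarrow> x \<le> y \<longrightarrow> U' x \<le> U' y)"

lemma mvt0:
  fixes U U' :: "real \<Rightarrow> real"
  assumes d: "\<forall>x\<ge>0. (U has_real_derivative U' x) (at x within {0..})"
    and xy: "0 \<le> x" "x < y"
  obtains z where "x < z" "z < y" "U y - U x = U' z * (y - x)"
proof -
  have c: "continuous_on {x..y} U"
    by (rule DERIV_continuous_on[where D=U'], rule DERIV_subset[where s="{0..}"]) (use d xy in auto)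
  have dz: "(U has_derivative (\<lambda>h. U' z * h)) (at z)" if "x < z" "z < y" for z
  proof -
    have "z \<in> interior {0::real..}" using that xy by auto
    hence e: "at z within {0..} = at z" by (rule at_within_interior)
    have "z \<ge> 0" using that xy by simp
    hence "(U has_real_derivative U' z) (at z within {0..})" using d by blast
    hence "(U has_real_derivative U' z) (at z)" using e by simp
    thus ?thesis unfolding has_field_derivative_def by simp
  qed
  obtain z where "x < z" "z < y" "U y - U x = (\<lambda>h. U' z * h) (y - x)"
    by (rule mvt[OF xy(2) c, of "\<lambda>z h. U' z * h"]) (rule dz, assumption+)
  thus ?thesis using that by simp
qed

lemma goodU_mono_aux:
  assumes g: "goodU U U'" and xy: "0 \<le> x" "x \<le> y"
  shows "U y - U x \<le> U' y * (y - x)" "U' y * (y - x) \<ge> 0 \<or> x = y"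
proof -
  have d: "\<forall>x\<ge>0. (U has_real_derivative U' x) (at x within {0..})"
    and m: "\<forall>x y. 0 < x \<longrightarrow> x \<le> y \<longrightarrow> U' x \<le> U' y" using g by (auto simp: goodU_def)
  show "U y - U x \<le> U' y * (y - x)"
  proof (cases "x = y")
    case False
    hence lt: "x < y" using xy by simp
    obtain z where z: "x < z" "z < y" "U y - U x = U' z * (y - x)" by (rule mvt0[OF d xy(1) lt])
    have "U' z \<le> U' y" using m z xy by auto
    thus ?thesis using z xy by (simp add: mult_right_mono)
  qed simp
  show "U' y * (y - x) \<ge> 0 \<or> x = y"
  proof (cases "x = y")
    case False
    hence lt: "0 < y" using xy by simp
    obtain z where z: "0 < z" "z < y" "U y - U 0 = U' z * (y - 0)" by (rule mvt0[OF d _ lt]) auto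
    have "U y \<ge> 0" "U 0 = 0" using g xy by (auto simp: goodU_def)
    hence "U' z * y \<ge> 0" using z by simp
    hence "U' z \<ge> 0" using z by (simp add: zero_le_mult_iff)
    moreover have "U' z \<le> U' y" using m z by simp
    ultimately have "U' y \<ge> 0" by linarith
    thus ?thesis using xy by simp
  qed simp
qed

lemma goodU_deriv_nonneg:
  assumes g: "goodU U U'" and y: "y > 0"
  shows "U' y \<ge> 0"
  using goodU_mono_aux(2)[OF g, of 0 y] y by (simp add: zero_le_mult_iff)

lemma goodU_mono:
  assumes g: "goodU U U'" and xy: "0 \<le> x" "x \<le> y"
  shows "U x \<le> U y"
proof (cases "x = y")
  case False
  have d: "\<forall>x\<ge>0. (U has_real_derivative U' x) (at x within {0..})" using g by (auto simp: goodU_def)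
  have lt: "x < y" using xy False by simp
  obtain z where z: "x < z" "z < y" "U y - U x = U' z * (y - x)" by (rule mvt0[OF d xy(1) lt])
  have "U' z \<ge> 0" using goodU_deriv_nonneg[OF g] z xy by auto
  hence "U' z * (y - x) \<ge> 0" using xy by simp
  thus ?thesis using z by linarith
qed simp

lemma goodU_tangent2:
  assumes g: "goodU U U'" and y: "y > 0"
  shows "y * U' y \<le> U (2*y) - U y"
proof -
  have d: "\<forall>x\<ge>0. (U has_real_derivative U' x) (at x within {0..})"
    and m: "\<forall>x y. 0 < x \<longrightarrow> x \<le> y \<longrightarrow> U' x \<le> U' y" using g by (auto simp: goodU_def)
  have lt: "y < 2*y" using y by simp
  obtain z where z: "y < z" "z < 2*y" "U (2*y) - U y = U' z * (2*y - y)" by (rule mvt0[OF d _ lt]) (use y in auto)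
  have "U' y \<le> U' z" using m z y by auto
  thus ?thesis using z y by (simp add: mult.commute mult_right_mono)
qed

lemma K1_good:
  assumes "K1 U"
  shows "\<exists>U'. goodU U U' \<and> (\<exists>K. \<forall>x\<ge>0. U (2*x) \<le> K * U x)"
proof -
  from assms obtain U' where
    d: "\<forall>x\<ge>0. (U has_real_derivative U' x) (at x within {0..})" and
    pos: "\<forall>x\<ge>0. U x \<ge> 0" and cv: "convex_on {0..} U" and U0: "U 0 = 0" and
    U'0: "U' 0 \<ge> 0" and cc: "concave_on {0..} U'"
    unfolding K1_def by blast
  have tan: "U x - U c \<ge> U' c * (x - c)" if "c > 0" "x \<ge> 0" for c x
    using convex_on_imp_above_tangent[OF cv, of c x] that d by auto
  have m: "U' x \<le> U' y" if "0 < x" "x \<le> y" for x y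
  proof (cases "x = y")
    case False
    have "(U' x - U' y) * (y - x) \<le> 0" using tan[of x y] tan[of y x] that by (simp add: algebra_simps)
    thus ?thesis using that False by (simp add: mult_le_0_iff)
  qed simp
  have g: "goodU U U'" unfolding goodU_def using d pos U0 m by blast
  have half: "U' (2*x) \<le> 2 * U' x" if "x \<ge> 0" for x
  proof -
    have "convex_on {0..} (\<lambda>x. - U' x)" using cc by (simp add: concave_on_def)
    from convex_onD[OF this, of "1/2" 0 "2*x"] that
    have "- U' ((1/2) *\<^sub>R 0 + (1 - 1/2) *\<^sub>R (2*x)) \<le> (1/2) * - U' 0 + (1 - 1/2) * - U' (2*x)"
      by auto
    thus ?thesis using U'0 by simp
  qed
  have "U (2*x) \<le> 9 * U x" if x: "x \<ge> 0" for x
  proof (cases "x = 0")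
    case True thus ?thesis using U0 by simp
  next
    case False
    hence xp: "x > 0" using x by simp
    have a: "U (2*x) - U x \<le> U' (2*x) * (2*x - x)" using goodU_mono_aux(1)[OF g, of x "2*x"] x by simp
    have b: "U' (2*x) \<le> 4 * U' (x/2)" using half[of x] half[of "x/2"] x by simp
    have c: "(x/2) * U' (x/2) \<le> U (2*(x/2)) - U (x/2)" using goodU_tangent2[OF g, of "x/2"] xp by simp
    have "U (x/2) \<ge> 0" using pos x by simp
    have "U' (2*x) * x \<le> 4 * U' (x/2) * x" using b xp by simp
    also have "\<dots> \<le> 8 * U x" using c \<open>U (x/2) \<ge> 0\<close> by simp
    finally show ?thesis using a by simp
  qed
  thus ?thesis using g by blast
qed

lemma K2_good:
  assumes "K2 U"
  shows "\<exists>U'. goodU U U' \<and> (\<exists>K. \<forall>x\<ge>0. U (2*x) \<le> K * U x)"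
proof -
  from assms obtain U' k where
    d: "\<forall>x\<ge>0. (U has_real_derivative U' x) (at x within {0..})" and
    pos: "\<forall>x\<ge>0. U x \<ge> 0" and U0: "U 0 = 0" and U'0: "U' 0 = 0" and
    cv: "convex_on {0..} U'" and kpos: "k > 0" and dl: "\<forall>r\<ge>0. U' (2 * r) \<le> k * U' r"
    unfolding K2_def by blast
  have lin: "U' s \<le> (s/t) * U' t" if "0 \<le> s" "s \<le> t" "t > 0" for s t
  proof -
    from convex_onD[OF cv, of "s/t" 0 t] that
    have "U' ((1 - s/t) *\<^sub>R 0 + (s/t) *\<^sub>R t) \<le> (1 - s/t) * U' 0 + (s/t) * U' t" by auto
    thus ?thesis using that U'0 by simp
  qed
  have nn: "U' y \<ge> 0" if yp: "y > 0" for y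
  proof (rule ccontr)
    assume "\<not> U' y \<ge> 0"
    hence neg: "U' y < 0" by simp
    obtain z where z: "0 < z" "z < y" "U y - U 0 = U' z * (y - 0)" by (rule mvt0[OF d _ yp]) auto
    have "U' z \<le> (z/y) * U' y" using lin[of z y] z by simp
    also have "\<dots> < 0" using neg z by (intro mult_pos_neg) auto
    finally have "U y < 0" using z U0 by (simp add: mult_neg_pos)
    moreover have "U y \<ge> 0" using pos yp by simp
    ultimately show False by linarith
  qed
  have m: "U' x \<le> U' y" if "0 < x" "x \<le> y" for x y
  proof -
    have "U' x \<le> (x/y) * U' y" using lin[of x y] that by simp
    also have "\<dots> \<le> 1 * U' y" using nn[of y] that by (intro mult_right_mono) auto
    also have "\<dots> = U' y" by simp
    finally show ?thesis .
  qed
  have g: "goodU U U'" unfolding goodU_def using d pos U0 m by blast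
  have "U (2*x) \<le> (1 + 2*k*k) * U x" if x: "x \<ge> 0" for x
  proof (cases "x = 0")
    case True thus ?thesis using U0 by simp
  next
    case False
    hence xp: "x > 0" using x by simp
    have a: "U (2*x) - U x \<le> U' (2*x) * (2*x - x)" using goodU_mono_aux(1)[OF g, of x "2*x"] x by simp
    have b1: "U' (2*x) \<le> k * U' x" using dl x by simp
    have b2: "U' x \<le> k * U' (x/2)" using dl[rule_format, of "x/2"] x by simp
    have "k * U' x \<le> k * (k * U' (x/2))" using b2 kpos by (intro mult_left_mono) auto
    hence b: "U' (2*x) \<le> k*k * U' (x/2)" using b1 by (simp add: mult.assoc)
    have c: "(x/2) * U' (x/2) \<le> U (2*(x/2)) - U (x/2)" using goodU_tangent2[OF g, of "x/2"] xp by simp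
    have "U (x/2) \<ge> 0" using pos x by simp
    have "U' (2*x) * x \<le> k*k * U' (x/2) * x" using b xp by simp
    also have "\<dots> = 2*k*k * ((x/2) * U' (x/2))" by simp
    also have "\<dots> \<le> 2*k*k * U x" using c \<open>U (x/2) \<ge> 0\<close> kpos
      by (intro mult_left_mono) auto
    finally show ?thesis using a by (simp add: algebra_simps)
  qed
  thus ?thesis using g by blast
qed


lemma powr_succ_le:
  fixes \<alpha> :: real
  assumes "0 \<le> \<alpha>" "\<alpha> \<le> 1" "i \<ge> 1"
  shows "real (i+1) powr \<alpha> \<le> real i powr \<alpha> + 1"
proof -
  have i0: "real i > 0" using assms by simp
  have e1: "real (i+1) powr \<alpha> = real (i+1) * real (i+1) powr (\<alpha> - 1)"
    using powr_add[of "real (i+1)" 1 "\<alpha> - 1"] by simp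
  have e2: "real i powr \<alpha> = real i * real i powr (\<alpha> - 1)"
    using powr_add[of "real i" 1 "\<alpha> - 1"] by simp
  have m1: "real (i+1) powr (\<alpha> - 1) \<le> real i powr (\<alpha> - 1)"
    by (rule powr_mono2') (use assms i0 in auto)
  have m2: "real (i+1) powr (\<alpha> - 1) \<le> 1"
    using powr_mono2'[of "\<alpha> - 1" 1 "real (i+1)"] assms by simp
  have "real (i+1) powr \<alpha> = real i * real (i+1) powr (\<alpha> - 1) + real (i+1) powr (\<alpha> - 1)"
    using e1 by (simp add: algebra_simps)
  also have "\<dots> \<le> real i * real i powr (\<alpha> - 1) + 1"
    using m1 m2 i0 by (intro add_mono mult_left_mono) auto
  finally show ?thesis using e2 by simp
qed

lemma powr_succ_le2:
  fixes \<alpha> :: real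
  assumes "0 \<le> \<alpha>" "\<alpha> \<le> 1" "i \<ge> 1"
  shows "real (i+1) powr \<alpha> \<le> 2 * real i powr \<alpha>"
proof -
  have "real (i+1) powr \<alpha> \<le> (2 * real i) powr \<alpha>"
    using assms by (intro powr_mono2) auto
  also have "\<dots> = 2 powr \<alpha> * real i powr \<alpha>" by (simp add: powr_mult)
  also have "\<dots> \<le> 2 * real i powr \<alpha>"
  proof -
    have "2 powr \<alpha> \<le> 2 powr (1::real)" using assms by (intro powr_mono) auto
    thus ?thesis by (intro mult_right_mono) auto
  qed
  finally show ?thesis .
qed

lemma powr_ge1: "0 \<le> (\<alpha>::real) \<Longrightarrow> i \<ge> 1 \<Longrightarrow> real i powr \<alpha> \<ge> 1"
  by (simp add: ge_one_powr_ge_zero)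

lemma powr_le_self: "0 \<le> (\<alpha>::real) \<Longrightarrow> \<alpha> \<le> 1 \<Longrightarrow> i \<ge> 1 \<Longrightarrow> real i powr \<alpha> \<le> real i"
  using powr_mono[of \<alpha> 1 "real i"] by simp

lemma U_weight:
  fixes U :: "real \<Rightarrow> real" and a :: "nat \<Rightarrow> real"
  assumes U: "K1 U \<or> K2 U" and al: "0 \<le> \<alpha>" "\<alpha> \<le> 1" and A: "A \<ge> 0"
    and a: "\<forall>i\<ge>1. 0 \<le> a i \<and> a i \<le> A * real i powr \<alpha>"
  shows "\<exists>K\<ge>0. \<forall>i\<ge>1. 0 \<le> U (real i powr \<alpha>) \<and> U (real i powr \<alpha>) \<le> U (real (i+1) powr \<alpha>) \<and>
            (U (real (i+1) powr \<alpha>) - U (real i powr \<alpha>)) * a i \<le> K * U (real i powr \<alpha>)"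
proof -
  obtain U' K0 where g: "goodU U U'" and K0: "\<forall>x\<ge>0. U (2*x) \<le> K0 * U x"
    using U K1_good K2_good by blast
  define K where "K = max K0 1"
  have pos: "\<forall>x\<ge>0. U x \<ge> 0" using g by (simp add: goodU_def)
  have Kd: "U (2*x) \<le> K * U x" if "x \<ge> 0" for x
  proof -
    have "K0 * U x \<le> K * U x" using pos that unfolding K_def by (intro mult_right_mono) auto
    thus ?thesis using K0 that by force
  qed
  have K1: "K \<ge> 1" unfolding K_def by simp
  show ?thesis
  proof (intro exI[of _ "A * K * K"] conjI allI impI)
    show "0 \<le> A * K * K" using A K1 by simp
    fix i :: nat assume i: "i \<ge> 1"
    define x where "x = real i powr \<alpha>"
    define y where "y = real (i+1) powr \<alpha>"
    have x1: "x \<ge> 1" unfolding x_def using powr_ge1 al i by simp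
    have xy: "x \<le> y" unfolding x_def y_def using al by (intro powr_mono2) auto
    have yx1: "y - x \<le> 1" using powr_succ_le[OF al i] unfolding x_def y_def by simp
    have y2: "y \<le> 2 * x" using powr_succ_le2[OF al i] unfolding x_def y_def by simp
    show "0 \<le> U (real i powr \<alpha>)" using pos x1 x_def by simp
    show "U (real i powr \<alpha>) \<le> U (real (i+1) powr \<alpha>)"
      using goodU_mono[OF g, of x y] x1 xy unfolding x_def y_def by simp
    have ai: "0 \<le> a i" "a i \<le> A * x" using a i unfolding x_def by auto
    have U'y: "U' y \<ge> 0" using goodU_deriv_nonneg[OF g, of y] x1 xy by simp
    have "(U y - U x) * a i \<le> (U' y * (y - x)) * a i"
      using goodU_mono_aux(1)[OF g, of x y] x1 xy ai by (intro mult_right_mono) auto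
    also have "\<dots> \<le> (U' y * 1) * (A * y)"
    proof (rule mult_mono)
      show "U' y * (y - x) \<le> U' y * 1" using U'y yx1 by (intro mult_left_mono) auto
      have "A * x \<le> A * y" using xy A by (intro mult_left_mono) auto
      thus "a i \<le> A * y" using ai by linarith
    qed (use U'y xy x1 A ai in auto)
    also have "\<dots> = A * (y * U' y)" by simp
    also have "\<dots> \<le> A * U (2*y)"
    proof -
      have "y * U' y \<le> U (2*y) - U y" using goodU_tangent2[OF g, of y] x1 xy by simp
      moreover have "U y \<ge> 0" using pos x1 xy by simp
      ultimately show ?thesis using A by (intro mult_left_mono) auto
    qed
    also have "\<dots> \<le> A * U (2*(2*x))"
      using goodU_mono[OF g, of "2*y" "2*(2*x)"] x1 xy y2 A by (intro mult_left_mono) auto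
    also have "\<dots> \<le> A * (K * (K * U x))"
    proof -
      have "U (2*(2*x)) \<le> K * U (2*x)" using Kd[of "2*x"] x1 by simp
      also have "\<dots> \<le> K * (K * U x)" using Kd[of x] x1 K1 by (intro mult_left_mono) auto
      finally show ?thesis using A by (intro mult_left_mono) auto
    qed
    finally show "(U (real (i+1) powr \<alpha>) - U (real i powr \<alpha>)) * a i \<le> A * K * K * U (real i powr \<alpha>)"
      unfolding x_def y_def by (simp add: mult.assoc)
  qed
qed


primrec smooth :: "(nat \<Rightarrow> real) \<Rightarrow> nat \<Rightarrow> real" where
  "smooth h 0 = 1"
| "smooth h (Suc i) = min (h (Suc i)) (smooth h i + inverse (real (Suc i)))"

lemma smooth_props:
  assumes h1: "\<And>i. h i \<ge> 1" and hm: "\<And>i. h i \<le> h (Suc i)"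
  shows "smooth h i \<ge> 1" "smooth h i \<le> h i" "smooth h i \<le> smooth h (Suc i)"
    "smooth h (Suc i) \<le> smooth h i + inverse (real (Suc i))"
proof -
  show ge1: "smooth h i \<ge> 1" for i
  proof (induction i)
    case (Suc i)
    have "inverse (real (Suc i)) \<ge> 0" by simp
    hence "1 \<le> smooth h i + inverse (real (Suc i))" using Suc by linarith
    thus ?case using h1[of "Suc i"] by simp
  qed simp
  show le: "smooth h i \<le> h i" for i
    by (induction i) (use h1 in auto)
  show "smooth h i \<le> smooth h (Suc i)"
    using le[of i] hm[of i] by auto
  show "smooth h (Suc i) \<le> smooth h i + inverse (real (Suc i))" by simp
qed

lemma smooth_unbounded:
  assumes h1: "\<And>i. h i \<ge> 1" and hm: "\<And>i. h i \<le> h (Suc i)"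
    and hu: "\<forall>M. \<exists>K. \<forall>i\<ge>K. h i \<ge> M"
  shows "\<exists>K. \<forall>i\<ge>K. smooth h i \<ge> M"
proof -
  obtain K0 where K0: "\<forall>i\<ge>K0. h i \<ge> M" using hu by blast
  have claim: "smooth h (K0 + d) \<ge> min M (smooth h K0 + (harm (K0 + d) - harm K0))" for d
  proof (induction d)
    case 0 thus ?case by simp
  next
    case (Suc d)
    have hM: "h (Suc (K0 + d)) \<ge> M" using K0 by simp
    have hs: "harm (K0 + Suc d) = harm (K0 + d) + inverse (real (Suc (K0 + d)))"
      by (simp add: harm_Suc)
    have io: "inverse (real (Suc (K0 + d))) \<ge> 0" by simp
    define X where "X = smooth h K0 + (harm (K0 + d) - harm K0)"
    define \<iota> where "\<iota> = inverse (real (Suc (K0 + d)))"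
    have io': "\<iota> \<ge> 0" using io unfolding \<iota>_def .
    have "min M (X + \<iota>) \<le> min M X + \<iota>" using io' by (simp add: min_def)
    also have "\<dots> \<le> smooth h (K0 + d) + \<iota>" using Suc unfolding X_def by simp
    finally have "min M (X + \<iota>) \<le> min (h (Suc (K0 + d))) (smooth h (K0 + d) + \<iota>)"
      using hM by (simp add: min_def)
    moreover have "X + \<iota> = smooth h K0 + (harm (K0 + Suc d) - harm K0)"
      unfolding X_def \<iota>_def using hs by simp
    ultimately show ?case unfolding \<iota>_def by simp
  qed
  have "\<forall>\<^sub>F n in sequentially. harm n \<ge> M + harm K0"
    using harm_at_top filterlim_at_top by blast
  then obtain K1 where K1: "\<forall>n\<ge>K1. (harm n :: real) \<ge> M + harm K0"
    by (auto simp: eventually_sequentially)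
  show ?thesis
  proof (intro exI[of _ "max K0 K1"] allI impI)
    fix i assume i: "i \<ge> max K0 K1"
    then obtain d where d: "i = K0 + d" by (metis le_Suc_ex max.boundedE)
    have "harm i \<ge> M + harm K0" using K1 i by simp
    moreover have "smooth h K0 \<ge> 1" using smooth_props(1)[of h, OF h1 hm] .
    ultimately have "min M (smooth h K0 + (harm (K0 + d) - harm K0)) \<ge> M" using d by simp
    thus "smooth h i \<ge> M" using claim[of d] d by simp
  qed
qed

lemma sqrt_telescope_ineq:
  fixes p q :: real
  assumes "0 < q" "q \<le> p"
  shows "(p - q) / sqrt p \<le> 2 * (sqrt p - sqrt q)"
proof -
  define u v where "u = sqrt p" "v = sqrt q"
  have uv: "0 < v" "v \<le> u" using assms unfolding u_v_def by auto
  have "p - q = (u - v) * (u + v)" unfolding u_v_def using assms by (simp add: algebra_simps)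
  hence "(p - q) / sqrt p = (u - v) * ((u + v) / u)" unfolding u_v_def by simp
  also have "\<dots> \<le> (u - v) * 2"
  proof (rule mult_left_mono)
    show "(u + v) / u \<le> 2" using uv by (simp add: field_simps)
  qed (use uv in simp)
  finally show ?thesis unfolding u_v_def by simp
qed

lemma superweight:
  fixes c a :: "nat \<Rightarrow> real" and \<alpha> A :: real
  assumes al: "0 \<le> \<alpha>" "\<alpha> \<le> 1" and A: "A \<ge> 0"
    and a: "\<forall>i\<ge>1. 0 \<le> a i \<and> a i \<le> A * real i powr \<alpha>"
    and cnn: "\<forall>i\<ge>1. 0 \<le> c i"
    and summ: "(\<lambda>i. real i powr \<alpha> * c i) summable_on {1..}"
  shows "\<exists>g G0. (\<forall>i\<ge>1. 1 \<le> g i \<and> real i powr \<alpha> \<le> g i \<and> g i \<le> g (i+1) \<and>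
              (g (i+1) - g i) * a i \<le> (2*A) * g i) \<and>
           (\<forall>N. (\<Sum>i\<in>{1..N}. g i * c i) \<le> G0) \<and>
           (\<forall>M. \<exists>K. \<forall>i\<ge>K. M * real i powr \<alpha> \<le> g i)"
proof -
  define cp where "cp i = (if i \<ge> 1 then real i powr \<alpha> * c i else 0)" for i
  have cp0: "cp i \<ge> 0" for i unfolding cp_def using cnn by auto
  have "cp summable_on UNIV \<longleftrightarrow> (\<lambda>i. real i powr \<alpha> * c i) summable_on {1..}"
    by (rule summable_on_cong_neutral) (auto simp: cp_def)
  hence "cp summable_on UNIV" using summ by simp
  hence scp: "summable cp" using summable_on_UNIV_nonneg_real_iff[of cp] cp0 by simp
  define \<tau> where "\<tau> n = (\<Sum>j. cp (j + n))" for n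
  have st: "summable (\<lambda>j. cp (j + n))" for n using summable_ignore_initial_segment[OF scp] .
  have tau0: "\<tau> n \<ge> 0" for n unfolding \<tau>_def using st cp0 by (intro suminf_nonneg) auto
  have tausuc: "\<tau> n - \<tau> (Suc n) = cp n" for n
  proof -
    have "(\<Sum>j. cp (Suc j + n)) = \<tau> n - cp (0 + n)"
      unfolding \<tau>_def by (rule suminf_split_head[OF st])
    moreover have "(\<lambda>j. cp (Suc j + n)) = (\<lambda>j. cp (j + Suc n))" by simp
    ultimately show ?thesis unfolding \<tau>_def by simp
  qed
  define \<rho> where "\<rho> n = \<tau> n + (1/2)^n" for n
  have rpos: "\<rho> n > 0" for n unfolding \<rho>_def using tau0[of n] by (intro add_nonneg_pos) auto
  have rdiff: "\<rho> n - \<rho> (Suc n) \<ge> cp n" for n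
    unfolding \<rho>_def using tausuc[of n] by simp
  have rdec: "\<rho> (Suc n) \<le> \<rho> n" for n using rdiff[of n] cp0[of n] by simp
  have rle0: "\<rho> n \<le> \<rho> 0" for n
    by (induction n) (use rdec order_trans in auto)
  define h0 where "h0 n = sqrt (\<rho> 0 / \<rho> n)" for n
  have h01: "h0 n \<ge> 1" for n unfolding h0_def using rle0[of n] rpos[of n] by simp
  have h0m: "h0 n \<le> h0 (Suc n)" for n
    unfolding h0_def using rdec[of n] rpos[of n] rpos[of "Suc n"] rpos[of 0]
    by (intro real_sqrt_le_mono divide_left_mono) auto
  have h0u: "\<forall>M. \<exists>K. \<forall>i\<ge>K. h0 i \<ge> M"
  proof
    fix M :: real
    define r where "r = \<rho> 0 / (max M 1)^2"
    have r0: "r > 0" unfolding r_def using rpos[of 0] by simp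
    obtain K1 where K1: "\<forall>n\<ge>K1. norm (\<Sum>i. cp (i + n)) < r/2"
      using suminf_exist_split[of "r/2" cp] r0 scp by auto
    have "(\<lambda>n. (1/2::real)^n) \<longlonglongrightarrow> 0" by (rule LIMSEQ_power_zero) simp
    hence "\<forall>\<^sub>F n in sequentially. (1/2::real)^n < r/2" using r0 by (intro order_tendstoD(2)) auto
    then obtain K2 where K2: "\<forall>n\<ge>K2. (1/2::real)^n < r/2" by (auto simp: eventually_sequentially)
    show "\<exists>K. \<forall>i\<ge>K. h0 i \<ge> M"
    proof (intro exI[of _ "max K1 K2"] allI impI)
      fix i assume i: "i \<ge> max K1 K2"
      have "\<tau> i < r/2" using K1 i tau0[of i] unfolding \<tau>_def by auto
      hence ri: "\<rho> i < r" using K2 i unfolding \<rho>_def by force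
      have "(max M 1)^2 = \<rho> 0 / r" unfolding r_def using rpos[of 0] by (simp add: field_simps)
      also have "\<dots> \<le> \<rho> 0 / \<rho> i" using ri rpos[of i] rpos[of 0] by (intro divide_left_mono) auto
      finally have "sqrt ((max M 1)^2) \<le> h0 i" unfolding h0_def by (intro real_sqrt_le_mono)
      thus "h0 i \<ge> M" by simp
    qed
  qed
  define s where "s = smooth h0"
  have s1: "s i \<ge> 1" and sh: "s i \<le> h0 i" and sm: "s i \<le> s (Suc i)"
    and sinc: "s (Suc i) \<le> s i + inverse (real (Suc i))" for i
    unfolding s_def using smooth_props[of h0, OF h01 h0m] by auto
  have su: "\<exists>K. \<forall>i\<ge>K. s i \<ge> M" for M
    unfolding s_def using smooth_unbounded[of h0, OF h01 h0m h0u] by blast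
  define g where "g i = real i powr \<alpha> * s i" for i
  have sumb: "(\<Sum>i<n. cp i * h0 i) \<le> 2 * \<rho> 0" for n
  proof -
    have "cp i * h0 i \<le> 2 * sqrt (\<rho> 0) * (sqrt (\<rho> i) - sqrt (\<rho> (Suc i)))" for i
    proof -
      have "cp i * h0 i = cp i / sqrt (\<rho> i) * sqrt (\<rho> 0)"
        unfolding h0_def by (simp add: real_sqrt_divide)
      also have "\<dots> \<le> (\<rho> i - \<rho> (Suc i)) / sqrt (\<rho> i) * sqrt (\<rho> 0)"
        using rdiff[of i] rpos[of i] rpos[of 0] by (intro mult_right_mono divide_right_mono) auto
      also have "\<dots> \<le> 2 * (sqrt (\<rho> i) - sqrt (\<rho> (Suc i))) * sqrt (\<rho> 0)"
        using sqrt_telescope_ineq[of "\<rho> (Suc i)" "\<rho> i"] rpos[of "Suc i"] rpos[of 0] rdec[of i]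
        by (intro mult_right_mono) auto
      finally show ?thesis by (simp add: algebra_simps)
    qed
    hence "(\<Sum>i<n. cp i * h0 i) \<le> (\<Sum>i<n. 2 * sqrt (\<rho> 0) * (sqrt (\<rho> i) - sqrt (\<rho> (Suc i))))"
      by (intro sum_mono) auto
    also have "\<dots> = 2 * sqrt (\<rho> 0) * (sqrt (\<rho> 0) - sqrt (\<rho> n))"
      using sum_lessThan_telescope'[of "\<lambda>i. sqrt (\<rho> i)" n] by (simp add: sum_distrib_left[symmetric])
    also have "\<dots> \<le> 2 * sqrt (\<rho> 0) * sqrt (\<rho> 0)"
      using rpos[of n] rpos[of 0] by (intro mult_left_mono) auto
    also have "\<dots> = 2 * \<rho> 0" using rpos[of 0] by (simp add: mult.assoc)
    finally show ?thesis .
  qed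
  show ?thesis
  proof (intro exI[of _ g] exI[of _ "2 * \<rho> 0"] conjI allI impI)
    fix i :: nat assume i: "i \<ge> 1"
    have p1: "real i powr \<alpha> \<ge> 1" using powr_ge1 al i by simp
    show "1 \<le> g i" unfolding g_def using p1 s1[of i] mult_mono[of 1 "real i powr \<alpha>" 1 "s i"] by simp
    show "real i powr \<alpha> \<le> g i" unfolding g_def using p1 s1[of i]
      mult_left_mono[of 1 "s i" "real i powr \<alpha>"] by simp
    have pm: "real i powr \<alpha> \<le> real (i+1) powr \<alpha>" using al by (intro powr_mono2) auto
    show "g i \<le> g (i+1)" unfolding g_def using pm s1[of i] sm[of i] p1
      by (intro mult_mono) auto
    have up: "g (i+1) \<le> (real i powr \<alpha> + 1) * (s i + inverse (real (Suc i)))"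
      unfolding g_def using powr_succ_le[OF al i] sinc[of i] s1[of "Suc i"]
      by (intro mult_mono) auto
    have "(real i powr \<alpha> + 1) * inverse (real (Suc i)) \<le> 1"
      using powr_le_self[OF al i] by (simp add: field_simps)
    hence "g (i+1) - g i \<le> s i + 1" using up unfolding g_def by (simp add: algebra_simps)
    also have "\<dots> \<le> 2 * s i" using s1[of i] by simp
    finally have gd: "g (i+1) - g i \<le> 2 * s i" .
    have ai: "0 \<le> a i" "a i \<le> A * real i powr \<alpha>" using a i by auto
    have "(g (i+1) - g i) * a i \<le> (2 * s i) * a i" using gd ai by (intro mult_right_mono) auto
    also have "\<dots> \<le> (2 * s i) * (A * real i powr \<alpha>)" using ai s1[of i] by (intro mult_left_mono) auto
    also have "\<dots> = (2*A) * g i" unfolding g_def by simp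
    finally show "(g (i+1) - g i) * a i \<le> (2*A) * g i" .
  next
    fix N :: nat
    have "(\<Sum>i\<in>{1..N}. g i * c i) = (\<Sum>i\<in>{1..N}. cp i * s i)"
      by (intro sum.cong) (auto simp: g_def cp_def)
    also have "\<dots> \<le> (\<Sum>i\<in>{1..N}. cp i * h0 i)"
      using sh cp0 by (intro sum_mono mult_left_mono) auto
    also have "\<dots> \<le> (\<Sum>i<Suc N. cp i * h0 i)"
      using cp0 h01 by (intro sum_mono2) (auto intro: mult_nonneg_nonneg order_trans[OF zero_le_one])
    also have "\<dots> \<le> 2 * \<rho> 0" by (rule sumb)
    finally show "(\<Sum>i\<in>{1..N}. g i * c i) \<le> 2 * \<rho> 0" .
  next
    fix M :: real
    obtain K where K: "\<forall>i\<ge>K. s i \<ge> M" using su by blast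
    show "\<exists>K. \<forall>i\<ge>K. M * real i powr \<alpha> \<le> g i"
    proof (intro exI[of _ K] allI impI)
      fix i assume "i \<ge> K"
      hence "M \<le> s i" using K by simp
      hence "M * real i powr \<alpha> \<le> s i * real i powr \<alpha>" by (intro mult_right_mono) auto
      thus "M * real i powr \<alpha> \<le> g i" unfolding g_def by (simp add: mult.commute)
    qed
  qed
qed

lemma sbp:
  fixes w f :: "nat \<Rightarrow> real"
  assumes "N \<ge> 1"
  shows "(\<Sum>i\<in>{2..N}. w i * (f (i-1) - f i)) = w 2 * f 1 + (\<Sum>i\<in>{2..N}. (w (i+1) - w i) * f i) - w (N+1) * f N"
  using assms
proof (induction N rule: nat_induct_at_least)
  case base thus ?case by (simp add: numeral_2_eq_2)
next
  case (Suc N)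
  have e: "{2..Suc N} = insert (Suc N) {2..N}" using Suc by auto
  have "Suc N \<notin> {2..N}" by simp
  thus ?case unfolding e using Suc by (simp add: algebra_simps)
qed

lemma telescope2:
  fixes f :: "nat \<Rightarrow> real"
  assumes "N \<ge> 1"
  shows "(\<Sum>i\<in>{2..N}. (f (i-1) - f i)) = f 1 - f N"
  using sbp[OF assms, of "\<lambda>_. 1" f] by simp

locale scheme =
  fixes \<alpha> lam A Kg G0 :: real and a b c0 g :: "nat \<Rightarrow> real"
  assumes al0: "0 \<le> \<alpha>" and al1: "\<alpha> \<le> 1" and lam0: "0 \<le> lam" and A0: "0 \<le> A"
    and a_nn: "\<And>i. i \<ge> 1 \<Longrightarrow> 0 \<le> a i"
    and a_le: "\<And>i. i \<ge> 1 \<Longrightarrow> a i \<le> A * real i powr \<alpha>"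
    and b_nn: "\<And>i. i \<ge> 1 \<Longrightarrow> 0 \<le> b i"
    and c0_nn: "\<And>i. i \<ge> 1 \<Longrightarrow> 0 \<le> c0 i"
    and g1: "\<And>i. i \<ge> 1 \<Longrightarrow> 1 \<le> g i"
    and gpow: "\<And>i. i \<ge> 1 \<Longrightarrow> real i powr \<alpha> \<le> g i"
    and gmono: "\<And>i. i \<ge> 1 \<Longrightarrow> g i \<le> g (i+1)"
    and gK: "\<And>i. i \<ge> 1 \<Longrightarrow> (g (i+1) - g i) * a i \<le> Kg * g i"
    and Kg0: "0 \<le> Kg"
    and gsum: "\<And>N. (\<Sum>i\<in>{1..N}. g i * c0 i) \<le> G0"
    and gsup: "\<And>M. \<exists>K. \<forall>i\<ge>K. M * real i powr \<alpha> \<le> g i"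
begin

definition JN :: "nat \<Rightarrow> (nat \<Rightarrow> real) \<Rightarrow> nat \<Rightarrow> real" where
  "JN N y i = (if i < N then a i * y 1 * y i - b (i+1) * y (i+1) else 0)"

definition FN :: "nat \<Rightarrow> (nat \<Rightarrow> real) \<Rightarrow> nat \<Rightarrow> real" where
  "FN N y i = (if i = 1 \<and> 1 \<le> N then lam - y 1 * ((\<Sum>j\<in>{1..N}. a j * y j) + a 1 * y 1)
     else if 2 \<le> i \<and> i \<le> N then JN N y (i-1) - JN N y i else 0)"

definition Bd :: "real \<Rightarrow> real" where "Bd t = c0 1 + lam * t"
definition Sd :: "real \<Rightarrow> real" where "Sd t = G0 + a 1 * (Bd t)^2 * t"
definition DN :: "nat \<Rightarrow> real" where
  "DN N = (\<Sum>j\<in>{1..N}. a j) * (Bd (real N) + Sd (real N)) + (\<Sum>j\<in>{1..N}. a j) * Bd (real N)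
     + (\<Sum>j\<in>{1..N+1}. b j)"
definition hN :: "nat \<Rightarrow> real" where "hN N = 1 / (real N + 1 + DN N)"
definition x0 :: "nat \<Rightarrow> nat \<Rightarrow> real" where "x0 N i = (if 1 \<le> i \<and> i \<le> N then c0 i else 0)"
definition stp :: "nat \<Rightarrow> (nat \<Rightarrow> real) \<Rightarrow> nat \<Rightarrow> real" where
  "stp N y i = y i + hN N * FN N y i"
definition xs :: "nat \<Rightarrow> nat \<Rightarrow> nat \<Rightarrow> real" where "xs N n = (stp N ^^ n) (x0 N)"

lemma xs_0: "xs N 0 = x0 N" by (simp add: xs_def)
lemma xs_Suc: "xs N (Suc n) i = xs N n i + hN N * FN N (xs N n) i"
  by (simp add: xs_def stp_def)

lemma G0_nn: "0 \<le> G0" using gsum[of 0] by simp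
lemma a1_nn: "0 \<le> a 1" using a_nn by simp
lemma a1_le: "a 1 \<le> A" using a_le[of 1] by simp
lemma c01_nn: "0 \<le> c0 1" using c0_nn by simp
lemma Bd_nn: "t \<ge> 0 \<Longrightarrow> 0 \<le> Bd t" unfolding Bd_def using lam0 c01_nn by simp
lemma Bd_mono: "s \<le> t \<Longrightarrow> Bd s \<le> Bd t" unfolding Bd_def using lam0 by (simp add: mult_left_mono)
lemma Sd_nn: "t \<ge> 0 \<Longrightarrow> 0 \<le> Sd t" unfolding Sd_def using G0_nn a1_nn by simp
lemma Sd_mono: assumes "0 \<le> s" "s \<le> t" shows "Sd s \<le> Sd t"
proof -
  have "(Bd s)^2 \<le> (Bd t)^2" using Bd_nn Bd_mono assms by (intro power_mono) auto
  hence "(Bd s)^2 * s \<le> (Bd t)^2 * t" using assms by (intro mult_mono) auto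
  thus ?thesis unfolding Sd_def using a1_nn by (simp add: mult.assoc mult_left_mono)
qed
lemma Sd_step: assumes "0 \<le> t" "0 \<le> h" shows "Sd t + h * (a 1 * (Bd (t+h))^2) \<le> Sd (t + h)"
proof -
  have "(Bd t)^2 \<le> (Bd (t+h))^2" using Bd_nn Bd_mono assms by (intro power_mono) auto
  hence "(Bd t)^2 * t \<le> (Bd (t+h))^2 * t" using assms by (intro mult_right_mono) auto
  hence "a 1 * ((Bd t)^2 * t) \<le> a 1 * ((Bd (t+h))^2 * t)" using a1_nn by (intro mult_left_mono) auto
  thus ?thesis unfolding Sd_def by (simp add: algebra_simps)
qed

lemma suma_nn: "0 \<le> (\<Sum>j\<in>{1..N}. a j)" using a_nn by (intro sum_nonneg) auto
lemma sumb_nn: "0 \<le> (\<Sum>j\<in>{1..N}. b j)" using b_nn by (intro sum_nonneg) auto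

lemma DN_nn: "0 \<le> DN N"
  unfolding DN_def using suma_nn[of N] sumb_nn[of "N+1"] Bd_nn[of "real N"] Sd_nn[of "real N"]
  by (intro add_nonneg_nonneg mult_nonneg_nonneg) (simp_all del: sum.cl_ivl_Suc)
lemma hN_pos: "0 < hN N" unfolding hN_def using DN_nn[of N] by simp
lemma hN_le: "hN N \<le> 1 / (real N + 1)"
  unfolding hN_def using DN_nn[of N] by (intro divide_left_mono) auto
lemma hN_le1: "hN N \<le> 1"
proof -
  have "1 / (real N + 1) \<le> 1" by (simp add: field_simps)
  thus ?thesis using hN_le[of N] by linarith
qed
lemma hN_DN: "hN N * DN N \<le> 1"
  unfolding hN_def using DN_nn[of N] by (simp add: divide_le_eq)

lemma xs_supp: "i = 0 \<or> N < i \<Longrightarrow> xs N n i = 0"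
  by (induction n) (auto simp: xs_0 xs_Suc x0_def FN_def)


lemma JN_le: assumes "\<forall>j. 0 \<le> y j" "i \<ge> 1" shows "JN N y i \<le> a i * y 1 * y i"
proof -
  have "0 \<le> b (i+1) * y (i+1)" using assms b_nn by simp
  moreover have "0 \<le> a i * y 1 * y i" using assms a_nn by simp
  ultimately show ?thesis unfolding JN_def by auto
qed

lemma JN_ge: assumes "\<forall>j. 0 \<le> y j" "i \<ge> 1" shows "- (b (i+1) * y (i+1)) \<le> JN N y i"
proof -
  have "0 \<le> b (i+1) * y (i+1)" using assms b_nn by simp
  moreover have "0 \<le> a i * y 1 * y i" using assms a_nn by simp
  ultimately show ?thesis unfolding JN_def by auto
qed

lemma FN_mid: "2 \<le> i \<Longrightarrow> i \<le> N \<Longrightarrow> FN N y i = JN N y (i-1) - JN N y i"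
  unfolding FN_def by auto

lemma FN_wsum: assumes "N \<ge> 1"
  shows "(\<Sum>i\<in>{2..N}. w i * FN N y i) = w 2 * JN N y 1 + (\<Sum>i\<in>{2..N}. (w (i+1) - w i) * JN N y i)"
proof -
  have "(\<Sum>i\<in>{2..N}. w i * FN N y i) = (\<Sum>i\<in>{2..N}. w i * (JN N y (i-1) - JN N y i))"
    by (intro sum.cong) (auto simp: FN_mid)
  also have "\<dots> = w 2 * JN N y 1 + (\<Sum>i\<in>{2..N}. (w (i+1) - w i) * JN N y i) - w (N+1) * JN N y N"
    by (rule sbp[OF assms])
  finally show ?thesis by (simp add: JN_def)
qed

lemma FN_sum: assumes "N \<ge> 1" shows "(\<Sum>i\<in>{2..N}. FN N y i) = JN N y 1"
  using FN_wsum[OF assms, of "\<lambda>_. 1" y] by simp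

lemma inv:
  "real n * hN N \<le> real N \<Longrightarrow> (\<forall>i. 0 \<le> xs N n i) \<and> xs N n 1 \<le> Bd (real n * hN N) \<and>
      (\<Sum>i\<in>{2..N}. xs N n i) \<le> Sd (real n * hN N)"
proof (induction n)
  case 0
  have "\<forall>i. 0 \<le> xs N 0 i" using c0_nn by (auto simp: xs_0 x0_def)
  moreover have "xs N 0 1 \<le> Bd (real 0 * hN N)" using c01_nn by (auto simp: xs_0 x0_def Bd_def)
  moreover have "(\<Sum>i\<in>{2..N}. xs N 0 i) \<le> Sd (real 0 * hN N)"
  proof -
    have "(\<Sum>i\<in>{2..N}. xs N 0 i) = (\<Sum>i\<in>{2..N}. c0 i)" by (intro sum.cong) (auto simp: xs_0 x0_def)
    also have "\<dots> \<le> (\<Sum>i\<in>{2..N}. g i * c0 i)"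
    proof (rule sum_mono)
      fix i assume "i \<in> {2..N}"
      hence "1 \<le> g i" "0 \<le> c0 i" using g1 c0_nn by auto
      thus "c0 i \<le> g i * c0 i" using mult_right_mono[of 1 "g i" "c0 i"] by simp
    qed
    also have "\<dots> \<le> (\<Sum>i\<in>{1..N}. g i * c0 i)"
      using g1 c0_nn by (intro sum_mono2) (auto intro: mult_nonneg_nonneg order_trans[OF zero_le_one])
    also have "\<dots> \<le> G0" by (rule gsum)
    finally show ?thesis by (simp add: Sd_def)
  qed
  ultimately show ?case by blast
next
  case (Suc n)
  define h where "h = hN N"
  define t where "t = real n * h"
  define y where "y = xs N n"
  have hp: "h > 0" unfolding h_def by (rule hN_pos)
  have tSuc: "real (Suc n) * hN N = t + h" unfolding t_def h_def by (simp add: algebra_simps)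
  have t0: "t \<ge> 0" unfolding t_def using hp by simp
  have tN: "t + h \<le> real N" using Suc.prems tSuc by simp
  hence tN': "t \<le> real N" using hp by simp
  have N1: "N \<ge> 1" using tN t0 hp by (cases N) auto
  have IH: "(\<forall>i. 0 \<le> y i) \<and> y 1 \<le> Bd t \<and> (\<Sum>i\<in>{2..N}. y i) \<le> Sd t"
    using Suc.IH tN' unfolding y_def t_def h_def by simp
  hence ynn: "\<And>i. 0 \<le> y i" and y1: "y 1 \<le> Bd t" and ys: "(\<Sum>i\<in>{2..N}. y i) \<le> Sd t" by auto
  have ysupp: "\<And>i. i = 0 \<or> N < i \<Longrightarrow> y i = 0" unfolding y_def by (rule xs_supp)
  have BN: "Bd t \<le> Bd (real N)" using tN' by (rule Bd_mono)
  have SN: "Sd t \<le> Sd (real N)" using tN' t0 by (intro Sd_mono)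
  have ybnd: "y j \<le> Bd (real N) + Sd (real N)" for j
  proof -
    consider "j = 1" | "2 \<le> j \<and> j \<le> N" | "j = 0 \<or> N < j" by linarith
    thus ?thesis
    proof cases
      case 1 thus ?thesis using y1 BN Sd_nn[of "real N"] by simp
    next
      case 2
      hence "y j \<le> (\<Sum>i\<in>{2..N}. y i)" using ynn by (intro member_le_sum) auto
      thus ?thesis using ys SN Bd_nn[of "real N"] by simp
    next
      case 3 thus ?thesis using ysupp[of j] Bd_nn[of "real N"] Sd_nn[of "real N"] by simp
    qed
  qed
  define Sa where "Sa = (\<Sum>j\<in>{1..N}. a j * y j)"
  have Sa_nn: "0 \<le> Sa" unfolding Sa_def using a_nn ynn by (intro sum_nonneg) auto
  have Sa_le: "Sa \<le> (\<Sum>j\<in>{1..N}. a j) * (Bd (real N) + Sd (real N))"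
    unfolding Sa_def sum_distrib_right using a_nn ybnd by (intro sum_mono mult_left_mono) auto
  have a1S: "a 1 \<le> (\<Sum>j\<in>{1..N}. a j)" using a_nn N1 by (intro member_le_sum) auto
  have ay1: "a i * y 1 \<le> (\<Sum>j\<in>{1..N}. a j) * Bd (real N)" if "1 \<le> i" "i \<le> N" for i
  proof (rule mult_mono)
    show "a i \<le> (\<Sum>j\<in>{1..N}. a j)" using a_nn that by (intro member_le_sum) auto
  qed (use y1 BN ynn suma_nn in auto)
  have bS: "b i \<le> (\<Sum>j\<in>{1..N+1}. b j)" if "1 \<le> i" "i \<le> N" for i
    using b_nn that by (intro member_le_sum) auto
  have DNe: "DN N = (\<Sum>j\<in>{1..N}. a j) * (Bd (real N) + Sd (real N)) + (\<Sum>j\<in>{1..N}. a j) * Bd (real N)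
     + (\<Sum>j\<in>{1..N+1}. b j)" by (simp only: DN_def)
  have sb: "0 \<le> (\<Sum>j\<in>{1..N+1}. b j)" by (rule sumb_nn)
  have hD: "h * DN N \<le> 1" unfolding h_def by (rule hN_DN)
  have loss1: "h * (Sa + a 1 * y 1) \<le> 1"
  proof -
    have "Sa + a 1 * y 1 \<le> DN N" using Sa_le ay1[of 1] N1 sb unfolding DNe by simp
    hence "h * (Sa + a 1 * y 1) \<le> h * DN N" using hp by (intro mult_left_mono) auto
    thus ?thesis using hD by simp
  qed
  have lossi: "h * (b i + a i * y 1) \<le> 1" if "2 \<le> i" "i \<le> N" for i
  proof -
    have "b i + a i * y 1 \<le> DN N" using bS[of i] ay1[of i] that Sa_le Sa_nn unfolding DNe by simp
    hence "h * (b i + a i * y 1) \<le> h * DN N" using hp by (intro mult_left_mono) auto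
    thus ?thesis using hD by simp
  qed
  have new: "xs N (Suc n) i = y i + h * FN N y i" for i unfolding y_def h_def by (simp add: xs_Suc)
  have F1: "FN N y 1 = lam - y 1 * (Sa + a 1 * y 1)" unfolding FN_def Sa_def using N1 by simp
  have nn: "0 \<le> xs N (Suc n) i" for i
  proof -
    consider "i = 1" | "2 \<le> i \<and> i \<le> N" | "i = 0 \<or> N < i" by linarith
    thus ?thesis
    proof cases
      case 1
      have "y 1 + h * FN N y 1 = y 1 * (1 - h * (Sa + a 1 * y 1)) + h * lam"
        unfolding F1 by (simp add: algebra_simps)
      moreover have "0 \<le> y 1 * (1 - h * (Sa + a 1 * y 1))" using loss1 ynn by simp
      moreover have "0 \<le> h * lam" using hp lam0 by simp
      ultimately show ?thesis using 1 new by simp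
    next
      case 2
      have yA: "\<forall>j. 0 \<le> y j" using ynn by simp
      have i1: "1 \<le> i - 1" using 2 by linarith
      have "- (b (i-1+1) * y (i-1+1)) \<le> JN N y (i-1)" by (rule JN_ge[OF yA i1])
      hence ge: "- (b i * y i) \<le> JN N y (i-1)" using 2 by simp
      have le: "JN N y i \<le> a i * y 1 * y i" using JN_le[OF yA, of i N] 2 by simp
      have "FN N y i \<ge> - ((b i + a i * y 1) * y i)" using ge le FN_mid[of i N y] 2
        by (simp add: algebra_simps)
      hence "h * (- ((b i + a i * y 1) * y i)) \<le> h * FN N y i"
        using hp by (intro mult_left_mono) auto
      hence "y i + h * FN N y i \<ge> y i - h * ((b i + a i * y 1) * y i)" by simp
      also have "y i - h * ((b i + a i * y 1) * y i) = y i * (1 - h * (b i + a i * y 1))"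
        by (simp add: algebra_simps)
      also have "\<dots> \<ge> 0" using lossi[of i] 2 ynn[of i] by simp
      finally show ?thesis using new by simp
    next
      case 3
      hence "FN N y i = 0" unfolding FN_def by auto
      thus ?thesis using new ynn by simp
    qed
  qed
  have b1: "xs N (Suc n) 1 \<le> Bd (t + h)"
  proof -
    have "0 \<le> y 1 * (Sa + a 1 * y 1)" using ynn Sa_nn a1_nn by simp
    hence "0 \<le> h * (y 1 * (Sa + a 1 * y 1))" using hp by simp
    hence "y 1 + h * FN N y 1 \<le> y 1 + h * lam" unfolding F1 by (simp add: algebra_simps)
    also have "\<dots> \<le> Bd t + h * lam" using y1 by simp
    also have "\<dots> = Bd (t + h)" unfolding Bd_def by (simp add: algebra_simps)
    finally show ?thesis using new by simp
  qed
  have s1: "(\<Sum>i\<in>{2..N}. xs N (Suc n) i) \<le> Sd (t + h)"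
  proof -
    have "(\<Sum>i\<in>{2..N}. xs N (Suc n) i) = (\<Sum>i\<in>{2..N}. y i) + h * (\<Sum>i\<in>{2..N}. FN N y i)"
      unfolding new by (simp add: sum.distrib sum_distrib_left)
    also have "\<dots> = (\<Sum>i\<in>{2..N}. y i) + h * JN N y 1" using FN_sum[OF N1] by simp
    also have "\<dots> \<le> Sd t + h * (a 1 * (Bd (t+h))^2)"
    proof -
      have "JN N y 1 \<le> a 1 * y 1 * y 1" using JN_le[of y 1 N] ynn by simp
      also have "\<dots> = a 1 * (y 1)^2" by (simp add: power2_eq_square)
      also have "\<dots> \<le> a 1 * (Bd (t+h))^2"
      proof -
        have "y 1 \<le> Bd (t+h)" using y1 Bd_mono[of t "t+h"] hp by simp
        hence "(y 1)^2 \<le> (Bd (t+h))^2" using ynn by (intro power_mono) auto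
        thus ?thesis using a1_nn by (intro mult_left_mono)
      qed
      finally have "h * JN N y 1 \<le> h * (a 1 * (Bd (t+h))^2)" using hp by (intro mult_left_mono) auto
      thus ?thesis using ys by simp
    qed
    also have "\<dots> \<le> Sd (t + h)" using Sd_step[OF t0] hp by simp
    finally show ?thesis .
  qed
  show ?case using nn b1 s1 tSuc by simp
qed


lemma N_ge1: assumes "real (Suc n) * hN N \<le> real N" shows "N \<ge> 1"
proof (rule ccontr)
  assume "\<not> N \<ge> 1"
  hence "N = 0" by simp
  moreover have "0 < real (Suc n) * hN N" using hN_pos[of N] by simp
  ultimately show False using assms by simp
qed

lemma moment:
  fixes w :: "nat \<Rightarrow> real"
  assumes w0: "\<And>i. i \<ge> 1 \<Longrightarrow> 0 \<le> w i" and wm: "\<And>i. i \<ge> 1 \<Longrightarrow> w i \<le> w (i+1)"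
    and wK: "\<And>i. i \<ge> 1 \<Longrightarrow> (w (i+1) - w i) * a i \<le> K * w i" and K0: "0 \<le> K"
    and W0: "(\<Sum>i\<in>{2..N}. w i * c0 i) \<le> W0" and TN: "T \<le> real N"
  shows "real n * hN N \<le> T \<Longrightarrow> (\<Sum>i\<in>{2..N}. w i * xs N n i)
      \<le> (W0 + real n * hN N * (w 2 * a 1 * (Bd T)^2)) * exp (K * Bd T * (real n * hN N))"
proof (induction n)
  case 0
  have "(\<Sum>i\<in>{2..N}. w i * xs N 0 i) = (\<Sum>i\<in>{2..N}. w i * c0 i)"
    by (intro sum.cong) (auto simp: xs_0 x0_def)
  thus ?case using W0 by simp
next
  case (Suc n)
  define h where "h = hN N"
  define t where "t = real n * h"
  define y where "y = xs N n"
  define B where "B = Bd T"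
  define p where "p = w 2 * a 1 * B^2"
  define m where "m = (\<Sum>i\<in>{2..N}. w i * y i)"
  have hp: "h > 0" unfolding h_def by (rule hN_pos)
  have tSuc: "real (Suc n) * hN N = t + h" unfolding t_def h_def by (simp add: algebra_simps)
  have t0: "t \<ge> 0" unfolding t_def using hp by simp
  have tT: "t + h \<le> T" using Suc.prems tSuc by simp
  have N1: "N \<ge> 1" using N_ge1[of n N] tT TN tSuc by simp
  have IV: "(\<forall>i. 0 \<le> y i) \<and> y 1 \<le> Bd t \<and> (\<Sum>i\<in>{2..N}. y i) \<le> Sd t"
    using inv[of n N] tT TN hp unfolding y_def t_def h_def by simp
  hence yA: "\<forall>i. 0 \<le> y i" and y1: "y 1 \<le> Bd t" by auto
  have yB: "y 1 \<le> B" using y1 Bd_mono[of t T] tT hp unfolding B_def by simp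
  have B0: "0 \<le> B" unfolding B_def using Bd_nn[of T] tT t0 hp by simp
  have m0: "0 \<le> m" unfolding m_def using w0 yA by (intro sum_nonneg) auto
  have W00: "0 \<le> W0"
  proof -
    have "0 \<le> (\<Sum>i\<in>{2..N}. w i * c0 i)" using w0 c0_nn by (intro sum_nonneg) auto
    thus ?thesis using W0 by simp
  qed
  have IH: "m \<le> (W0 + t * p) * exp (K * B * t)"
    using Suc.IH tT hp unfolding m_def y_def t_def h_def p_def B_def by simp
  have p0: "0 \<le> p" unfolding p_def using w0[of 2] a1_nn by simp
  have step: "(\<Sum>i\<in>{2..N}. w i * xs N (Suc n) i) = m + h * (w 2 * JN N y 1 + (\<Sum>i\<in>{2..N}. (w (i+1) - w i) * JN N y i))"
  proof -
    have "(\<Sum>i\<in>{2..N}. w i * xs N (Suc n) i) = m + h * (\<Sum>i\<in>{2..N}. w i * FN N y i)"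
      unfolding m_def y_def h_def xs_Suc by (simp add: algebra_simps sum.distrib sum_distrib_left)
    thus ?thesis using FN_wsum[OF N1, of w y] by simp
  qed
  have j1: "w 2 * JN N y 1 \<le> p"
  proof -
    have "JN N y 1 \<le> a 1 * y 1 * y 1" using JN_le[OF yA, of 1 N] by simp
    also have "\<dots> \<le> a 1 * B * B" using yB yA a1_nn B0 by (intro mult_mono) (auto intro: mult_nonneg_nonneg)
    finally have "w 2 * JN N y 1 \<le> w 2 * (a 1 * B * B)" using w0[of 2] by (intro mult_left_mono) auto
    thus ?thesis unfolding p_def by (simp add: power2_eq_square mult.assoc)
  qed
  have j2: "(\<Sum>i\<in>{2..N}. (w (i+1) - w i) * JN N y i) \<le> K * B * m"
  proof -
    have "(\<Sum>i\<in>{2..N}. (w (i+1) - w i) * JN N y i) \<le> (\<Sum>i\<in>{2..N}. K * B * (w i * y i))"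
    proof (rule sum_mono)
      fix i assume i: "i \<in> {2..N}"
      have "(w (i+1) - w i) * JN N y i \<le> (w (i+1) - w i) * (a i * y 1 * y i)"
        using JN_le[OF yA, of i N] wm[of i] i by (intro mult_left_mono) auto
      also have "\<dots> = ((w (i+1) - w i) * a i) * (y 1 * y i)" by simp
      also have "\<dots> \<le> (K * w i) * (y 1 * y i)" using wK[of i] i yA by (intro mult_right_mono) auto
      also have "\<dots> \<le> (K * w i) * (B * y i)" using K0 w0[of i] i yA yB by (intro mult_left_mono mult_right_mono) auto
      finally show "(w (i+1) - w i) * JN N y i \<le> K * B * (w i * y i)" by (simp add: algebra_simps)
    qed
    thus ?thesis unfolding m_def sum_distrib_left by simp
  qed
  have "(\<Sum>i\<in>{2..N}. w i * xs N (Suc n) i) \<le> m + h * (p + K * B * m)"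
    unfolding step using j1 j2 hp by (intro add_left_mono mult_left_mono) auto
  also have "\<dots> = m * (1 + h * K * B) + h * p" by (simp add: algebra_simps)
  also have "\<dots> \<le> ((W0 + t * p) * exp (K * B * t)) * exp (h * K * B) + h * p"
    using IH hp K0 B0 m0 by (intro add_right_mono mult_mono) auto
  also have "\<dots> = (W0 + t * p) * exp (K * B * (t + h)) + h * p"
    by (simp add: exp_add[symmetric] algebra_simps)
  also have "\<dots> \<le> (W0 + t * p) * exp (K * B * (t + h)) + h * p * exp (K * B * (t + h))"
  proof -
    have "1 \<le> exp (K * B * (t + h))" using hp K0 B0 t0 by simp
    hence "h * p * 1 \<le> h * p * exp (K * B * (t + h))" using hp p0 by (intro mult_left_mono) auto
    thus ?thesis by simp
  qed
  also have "\<dots> = (W0 + (t + h) * p) * exp (K * B * (t + h))" by (simp add: algebra_simps)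
  finally show ?case unfolding tSuc p_def B_def .
qed


lemma g_nn: "i \<ge> 1 \<Longrightarrow> 0 \<le> g i" using g1[of i] by simp

definition MB :: "(nat \<Rightarrow> real) \<Rightarrow> real \<Rightarrow> real \<Rightarrow> real \<Rightarrow> real" where
  "MB w K W0 T = (W0 + T * (w 2 * a 1 * (Bd T)^2)) * exp (K * Bd T * T)"

lemma moment':
  fixes w :: "nat \<Rightarrow> real"
  assumes w0: "\<And>i. i \<ge> 1 \<Longrightarrow> 0 \<le> w i" and wm: "\<And>i. i \<ge> 1 \<Longrightarrow> w i \<le> w (i+1)"
    and wK: "\<And>i. i \<ge> 1 \<Longrightarrow> (w (i+1) - w i) * a i \<le> K * w i" and K0: "0 \<le> K"
    and W0: "(\<Sum>i\<in>{2..N}. w i * c0 i) \<le> W0" and TN: "T \<le> real N"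
    and nT: "real n * hN N \<le> T"
  shows "(\<Sum>i\<in>{2..N}. w i * xs N n i) \<le> MB w K W0 T"
proof -
  define t where "t = real n * hN N"
  have t0: "0 \<le> t" unfolding t_def using hN_pos[of N] by simp
  have tT: "t \<le> T" using nT unfolding t_def .
  have W00: "0 \<le> W0"
  proof -
    have "0 \<le> (\<Sum>i\<in>{2..N}. w i * c0 i)" using w0 c0_nn by (intro sum_nonneg) auto
    thus ?thesis using W0 by simp
  qed
  have p0: "0 \<le> w 2 * a 1 * (Bd T)^2" using w0[of 2] a1_nn by simp
  have B0: "0 \<le> Bd T" using Bd_nn[of T] t0 tT by simp
  have "(\<Sum>i\<in>{2..N}. w i * xs N n i) \<le> (W0 + t * (w 2 * a 1 * (Bd T)^2)) * exp (K * Bd T * t)"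
    using moment[OF w0 wm wK K0 W0 TN nT] unfolding t_def by simp
  also have "\<dots> \<le> (W0 + T * (w 2 * a 1 * (Bd T)^2)) * exp (K * Bd T * T)"
  proof (rule mult_mono)
    show "W0 + t * (w 2 * a 1 * (Bd T)^2) \<le> W0 + T * (w 2 * a 1 * (Bd T)^2)"
      using tT p0 by (simp add: mult_right_mono)
    show "exp (K * Bd T * t) \<le> exp (K * Bd T * T)"
      using tT K0 B0 by (simp add: mult_left_mono)
  qed (use W00 t0 p0 tT in auto)
  finally show ?thesis unfolding MB_def .
qed

definition MG :: "real \<Rightarrow> real" where "MG T = MB g Kg G0 T"

lemma g_init: "(\<Sum>i\<in>{2..N}. g i * c0 i) \<le> G0"
proof -
  have "(\<Sum>i\<in>{2..N}. g i * c0 i) \<le> (\<Sum>i\<in>{1..N}. g i * c0 i)"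
    using g1 c0_nn by (intro sum_mono2) (auto intro: mult_nonneg_nonneg order_trans[OF zero_le_one])
  thus ?thesis using gsum[of N] by simp
qed

lemma state_bounds:
  assumes nT: "real n * hN N \<le> T" and TN: "T \<le> real N"
  shows "(\<forall>i. 0 \<le> xs N n i) \<and> xs N n 1 \<le> Bd T \<and> (\<Sum>i\<in>{2..N}. g i * xs N n i) \<le> MG T"
proof -
  have IV: "(\<forall>i. 0 \<le> xs N n i) \<and> xs N n 1 \<le> Bd (real n * hN N)"
    using inv[of n N] nT TN by simp
  moreover have "Bd (real n * hN N) \<le> Bd T" using nT by (rule Bd_mono)
  moreover have "(\<Sum>i\<in>{2..N}. g i * xs N n i) \<le> MG T"
    unfolding MG_def
    by (rule moment'[OF _ gmono gK Kg0 g_init TN nT]) (use g1 in \<open>auto intro: order_trans[OF zero_le_one]\<close>)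
  ultimately show ?thesis by auto
qed

definition Rb :: "real \<Rightarrow> real" where "Rb T = Bd T + MG T"

definition Lc :: "nat \<Rightarrow> real \<Rightarrow> real" where
  "Lc i T = (if i = 1 then lam + Bd T * (A * Rb T + A * Bd T)
     else (a (i-1) + a i) * Bd T * Rb T + (b i + b (i+1)) * Rb T)"

lemma comp_bounds:
  fixes y :: "nat \<Rightarrow> real"
  assumes nn: "\<forall>i. 0 \<le> y i" and y1: "y 1 \<le> Bd T" and gs: "(\<Sum>i\<in>{2..N}. g i * y i) \<le> MG T"
    and supp: "\<And>i. i = 0 \<or> N < i \<Longrightarrow> y i = 0"
  shows "\<And>j. y j \<le> Rb T" "(\<Sum>j\<in>{1..N}. a j * y j) \<le> A * Rb T" "0 \<le> MG T" "0 \<le> Bd T"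
proof -
  have mg0: "0 \<le> (\<Sum>i\<in>{2..N}. g i * y i)" using nn by (intro sum_nonneg) (auto intro!: mult_nonneg_nonneg g_nn)
  thus MG0: "0 \<le> MG T" using gs by simp
  show B0: "0 \<le> Bd T" using nn[rule_format, of 1] y1 by simp
  show yj: "y j \<le> Rb T" for j
  proof -
    consider "j = 1" | "2 \<le> j \<and> j \<le> N" | "j = 0 \<or> N < j" by linarith
    thus ?thesis
    proof cases
      case 1 thus ?thesis using y1 MG0 unfolding Rb_def by simp
    next
      case 2
      have "y j \<le> g j * y j" using g1[of j] nn 2 mult_right_mono[of 1 "g j" "y j"] by simp
      also have "\<dots> \<le> (\<Sum>i\<in>{2..N}. g i * y i)"
        using nn 2 by (intro member_le_sum[where f="\<lambda>i. g i * y i"]) (auto intro!: mult_nonneg_nonneg g_nn)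
      finally show ?thesis using gs B0 unfolding Rb_def by simp
    next
      case 3 thus ?thesis using supp[of j] B0 MG0 unfolding Rb_def by simp
    qed
  qed
  show "(\<Sum>j\<in>{1..N}. a j * y j) \<le> A * Rb T"
  proof (cases "N \<ge> 1")
    case False thus ?thesis using A0 B0 MG0 unfolding Rb_def by simp
  next
    case True
    have e: "{1..N} = insert 1 {2..N}" using True by auto
    have "(\<Sum>j\<in>{1..N}. a j * y j) = a 1 * y 1 + (\<Sum>j\<in>{2..N}. a j * y j)" unfolding e by simp
    also have "\<dots> \<le> A * y 1 + (\<Sum>j\<in>{2..N}. A * (g j * y j))"
    proof (intro add_mono sum_mono)
      show "a 1 * y 1 \<le> A * y 1" using a1_le nn by (intro mult_right_mono) auto
      fix j assume j: "j \<in> {2..N}"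
      have "a j \<le> A * g j" using a_le[of j] gpow[of j] A0 j
        by (meson atLeastAtMost_iff le_trans mult_left_mono one_le_numeral order.trans)
      hence "a j * y j \<le> (A * g j) * y j" using nn by (intro mult_right_mono) auto
      thus "a j * y j \<le> A * (g j * y j)" by simp
    qed
    also have "\<dots> = A * (y 1 + (\<Sum>j\<in>{2..N}. g j * y j))" by (simp add: sum_distrib_left algebra_simps)
    also have "\<dots> \<le> A * Rb T" unfolding Rb_def using y1 gs A0 by (intro mult_left_mono) auto
    finally show ?thesis .
  qed
qed

lemma FN_bound:
  assumes nn: "\<forall>i. 0 \<le> y i" and y1: "y 1 \<le> Bd T" and gs: "(\<Sum>i\<in>{2..N}. g i * y i) \<le> MG T"
    and supp: "\<And>i. i = 0 \<or> N < i \<Longrightarrow> y i = 0" and i1: "i \<ge> 1"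
  shows "\<bar>FN N y i\<bar> \<le> Lc i T"
proof -
  note cb = comp_bounds[OF nn y1 gs supp]
  have R0: "0 \<le> Rb T" unfolding Rb_def using cb by simp
  consider "i = 1" | "2 \<le> i \<and> i \<le> N" | "i \<noteq> 1 \<and> \<not> (2 \<le> i \<and> i \<le> N)" by linarith
  thus ?thesis
  proof cases
    case 1
    show ?thesis
    proof (cases "N \<ge> 1")
      case False
      hence "FN N y i = 0" unfolding FN_def by simp
      thus ?thesis using 1 lam0 cb A0 R0 unfolding Lc_def by simp
    next
      case True
      define S where "S = (\<Sum>j\<in>{1..N}. a j * y j)"
      have S0: "0 \<le> S" unfolding S_def using a_nn nn by (intro sum_nonneg) auto
      have F: "FN N y i = lam - y 1 * (S + a 1 * y 1)" unfolding FN_def S_def using 1 True by simp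
      have q0: "0 \<le> y 1 * (S + a 1 * y 1)" using nn S0 a1_nn by simp
      have "y 1 * (S + a 1 * y 1) \<le> Bd T * (A * Rb T + A * Bd T)"
      proof (rule mult_mono)
        show "S + a 1 * y 1 \<le> A * Rb T + A * Bd T"
          using cb(2) a1_le nn y1 A0 unfolding S_def
          by (intro add_mono mult_mono) auto
      qed (use y1 cb S0 nn a1_nn in auto)
      thus ?thesis using F q0 lam0 1 unfolding Lc_def by simp
    qed
  next
    case 2
    have yA: "\<forall>j. 0 \<le> y j" using nn by simp
    have i1': "1 \<le> i - 1" using 2 by linarith
    have ge1: "- (b i * y i) \<le> JN N y (i-1)" using JN_ge[OF yA i1', of N] 2 by simp
    have le1: "JN N y (i-1) \<le> a (i-1) * y 1 * y (i-1)" using JN_le[OF yA i1'] by simp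
    have ge2: "- (b (i+1) * y (i+1)) \<le> JN N y i" using JN_ge[OF yA, of i N] 2 by simp
    have le2: "JN N y i \<le> a i * y 1 * y i" using JN_le[OF yA, of i N] 2 by simp
    have F: "FN N y i = JN N y (i-1) - JN N y i" using FN_mid 2 by simp
    have ai: "0 \<le> a (i-1)" "0 \<le> a i" "0 \<le> b i" "0 \<le> b (i+1)" using a_nn b_nn i1' 2 by auto
    have m1: "a (i-1) * y 1 * y (i-1) \<le> a (i-1) * Bd T * Rb T"
      using ai nn y1 cb(1)[of "i-1"] cb(4) by (intro mult_mono) auto
    have m2: "a i * y 1 * y i \<le> a i * Bd T * Rb T"
      using ai nn y1 cb(1)[of i] cb(4) by (intro mult_mono) auto
    have m3: "b i * y i \<le> b i * Rb T" using ai cb(1)[of i] by (intro mult_left_mono) auto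
    have m4: "b (i+1) * y (i+1) \<le> b (i+1) * Rb T" using ai cb(1)[of "i+1"] by (intro mult_left_mono) auto
    have "\<bar>FN N y i\<bar> \<le> a (i-1) * Bd T * Rb T + b i * Rb T + a i * Bd T * Rb T + b (i+1) * Rb T"
    proof -
      have "0 \<le> a (i-1) * Bd T * Rb T" "0 \<le> a i * Bd T * Rb T" "0 \<le> b i * Rb T" "0 \<le> b (i+1) * Rb T"
        using ai cb(4) R0 by auto
      thus ?thesis unfolding F abs_le_iff using ge1 le1 ge2 le2 m1 m2 m3 m4 by linarith
    qed
    also have "\<dots> = Lc i T" unfolding Lc_def using 2 by (simp add: algebra_simps)
    finally show ?thesis .
  next
    case 3
    hence "FN N y i = 0" unfolding FN_def by auto
    moreover have "0 \<le> Lc i T" unfolding Lc_def using 3 i1 a_nn b_nn cb R0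
      by (auto intro!: add_nonneg_nonneg mult_nonneg_nonneg)
    ultimately show ?thesis by simp
  qed
qed


definition nf :: "nat \<Rightarrow> real \<Rightarrow> nat" where "nf N t = nat \<lfloor>t / hN N\<rfloor>"
definition fi :: "nat \<Rightarrow> real \<Rightarrow> nat \<Rightarrow> real" where
  "fi N t i = xs N (nf N t) i + (t - real (nf N t) * hN N) * FN N (xs N (nf N t)) i"

lemma nf_props:
  assumes t0: "0 \<le> t"
  shows "real (nf N t) * hN N \<le> t" "t < (real (nf N t) + 1) * hN N"
proof -
  have hp: "0 < hN N" by (rule hN_pos)
  have q0: "0 \<le> t / hN N" using t0 hp by simp
  have e: "real (nf N t) = real_of_int \<lfloor>t / hN N\<rfloor>" unfolding nf_def using q0 by simp
  have "real_of_int \<lfloor>t / hN N\<rfloor> \<le> t / hN N" by (rule of_int_floor_le)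
  thus "real (nf N t) * hN N \<le> t" using e hp by (simp add: le_divide_eq)
  have "t / hN N < real_of_int \<lfloor>t / hN N\<rfloor> + 1" by (rule real_of_int_floor_add_one_gt)
  hence "t < (real_of_int \<lfloor>t / hN N\<rfloor> + 1) * hN N" by (simp only: pos_divide_less_eq[OF hp])
  thus "t < (real (nf N t) + 1) * hN N" using e by simp
qed

lemma nf_mono: "s \<le> t \<Longrightarrow> nf N s \<le> nf N t"
  unfolding nf_def using hN_pos[of N] by (intro nat_mono floor_mono divide_right_mono) auto

lemma nf_grid: "nf N (real m * hN N) = m"
  unfolding nf_def using hN_pos[of N] by simp

lemma fi_grid: "fi N (real m * hN N) i = xs N m i"
  unfolding fi_def nf_grid by simp

lemma xs_sum: "xs N (p + d) i = xs N p i + (\<Sum>j\<in>{p..<p+d}. hN N * FN N (xs N j) i)"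
  by (induction d) (simp_all add: xs_Suc)

lemma fi_sum_le:
  assumes t0: "0 \<le> t"
    and M1: "(\<Sum>i\<in>F. w i * xs N (nf N t) i) \<le> M"
    and M2: "(\<Sum>i\<in>F. w i * xs N (Suc (nf N t)) i) \<le> M"
  shows "(\<Sum>i\<in>F. w i * fi N t i) \<le> M"
proof -
  define n where "n = nf N t"
  define h where "h = hN N"
  define \<theta> where "\<theta> = (t - real n * h) / h"
  have hp: "0 < h" unfolding h_def by (rule hN_pos)
  have th0: "0 \<le> \<theta>" unfolding \<theta>_def using nf_props(1)[OF t0, of N] hp unfolding n_def h_def by simp
  have th1: "\<theta> \<le> 1" unfolding \<theta>_def using nf_props(2)[OF t0, of N] hp unfolding n_def h_def
    by (simp add: divide_le_eq algebra_simps)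
  have e: "fi N t i = (1 - \<theta>) * xs N n i + \<theta> * xs N (Suc n) i" for i
    unfolding fi_def xs_Suc \<theta>_def n_def[symmetric] h_def[symmetric] using hp by (simp add: field_simps)
  have "(\<Sum>i\<in>F. w i * fi N t i) = (\<Sum>i\<in>F. (1 - \<theta>) * (w i * xs N n i) + \<theta> * (w i * xs N (Suc n) i))"
    by (intro sum.cong) (simp_all add: e algebra_simps)
  also have "\<dots> = (1 - \<theta>) * (\<Sum>i\<in>F. w i * xs N n i) + \<theta> * (\<Sum>i\<in>F. w i * xs N (Suc n) i)"
    by (simp add: sum.distrib sum_distrib_left)
  finally have "(\<Sum>i\<in>F. w i * fi N t i) = (1 - \<theta>) * (\<Sum>i\<in>F. w i * xs N n i) + \<theta> * (\<Sum>i\<in>F. w i * xs N (Suc n) i)" .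
  also have "\<dots> \<le> (1 - \<theta>) * M + \<theta> * M"
    using M1 M2 th0 th1 unfolding n_def by (intro add_mono mult_left_mono) auto
  finally show ?thesis by (simp add: algebra_simps)
qed

lemma fi_supp: assumes "i = 0 \<or> N < i" shows "fi N t i = 0"
proof -
  have "FN N y i = 0" for y unfolding FN_def using assms by auto
  thus ?thesis unfolding fi_def using xs_supp[OF assms] by simp
qed

lemma fi_bounds:
  assumes t0: "0 \<le> t" and tT: "t \<le> T" and TN: "T + 1 \<le> real N"
  shows "0 \<le> fi N t i" "fi N t 1 \<le> Bd (T+1)" "(\<Sum>i\<in>{2..N}. g i * fi N t i) \<le> MG (T+1)"
proof -
  define n where "n = nf N t"
  have hp: "0 < hN N" by (rule hN_pos)
  have n1: "real n * hN N \<le> T + 1" using nf_props(1)[OF t0, of N] tT unfolding n_def by simp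
  have n2: "real (Suc n) * hN N \<le> T + 1"
    using nf_props(1)[OF t0, of N] tT hN_le1[of N] unfolding n_def by (simp add: algebra_simps)
  note sb1 = state_bounds[OF n1 TN] and sb2 = state_bounds[OF n2 TN]
  have "(\<Sum>j\<in>{i}. (-1) * fi N t j) \<le> 0"
    by (rule fi_sum_le[OF t0]) (use sb1 sb2 n_def in auto)
  thus "0 \<le> fi N t i" by simp
  have "(\<Sum>j\<in>{1}. 1 * fi N t j) \<le> Bd (T+1)"
    by (rule fi_sum_le[OF t0]) (use sb1 sb2 n_def in auto)
  thus "fi N t 1 \<le> Bd (T+1)" by simp
  show "(\<Sum>i\<in>{2..N}. g i * fi N t i) \<le> MG (T+1)"
    by (rule fi_sum_le[OF t0]) (use sb1 sb2 n_def in auto)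
qed

lemma fi_incr:
  assumes s0: "0 \<le> s" and st: "s \<le> t"
    and E: "\<And>m. nf N s \<le> m \<Longrightarrow> m \<le> nf N t \<Longrightarrow> \<bar>FN N (xs N m) i - c\<bar> \<le> E"
  shows "\<bar>fi N t i - fi N s i - (t - s) * c\<bar> \<le> (t - s) * E"
proof -
  define p where "p = nf N s"
  define q where "q = nf N t"
  define h where "h = hN N"
  define D where "D j = FN N (xs N j) i - c" for j
  have t0: "0 \<le> t" using s0 st by simp
  have hp: "0 < h" unfolding h_def by (rule hN_pos)
  have pq: "p \<le> q" unfolding p_def q_def using st by (rule nf_mono)
  have ps: "real p * h \<le> s" "s < (real p + 1) * h" using nf_props[OF s0, of N] unfolding p_def h_def by auto
  have qt: "real q * h \<le> t" "t < (real q + 1) * h" using nf_props[OF t0, of N] unfolding q_def h_def by auto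
  have ED: "\<And>j. p \<le> j \<Longrightarrow> j \<le> q \<Longrightarrow> \<bar>D j\<bar> \<le> E" unfolding D_def p_def q_def using E by simp
  have E0: "0 \<le> E" using ED[of p] pq abs_ge_zero[of "D p"] by linarith
  have fs: "fi N s i = xs N p i + (s - real p * h) * (D p + c)" unfolding fi_def p_def h_def D_def by simp
  have ft: "fi N t i = xs N q i + (t - real q * h) * (D q + c)" unfolding fi_def q_def h_def D_def by simp
  show ?thesis
  proof (cases "p = q")
    case True
    have "fi N t i - fi N s i - (t - s) * c = (t - s) * D p"
      unfolding fs ft True by (simp add: algebra_simps)
    hence "\<bar>fi N t i - fi N s i - (t - s) * c\<bar> = (t - s) * \<bar>D p\<bar>" using st by (simp add: abs_mult)
    also have "\<dots> \<le> (t - s) * E" using ED[of p] pq st by (intro mult_left_mono) auto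
    finally show ?thesis .
  next
    case False
    hence pq': "p < q" using pq by simp
    have xq: "xs N q i = xs N p i + h * (D p + c) + (\<Sum>j\<in>{Suc p..<q}. h * (D j + c))"
    proof -
      have "xs N q i = xs N p i + (\<Sum>j\<in>{p..<p + (q - p)}. h * FN N (xs N j) i)"
        using xs_sum[of N p "q - p" i] pq unfolding h_def by simp
      also have "{p..<p + (q - p)} = insert p {Suc p..<q}" using pq' by auto
      finally show ?thesis unfolding D_def by simp
    qed
    have card: "(\<Sum>j\<in>{Suc p..<q}. h * c) = (real q - real p - 1) * h * c"
      using pq' by (simp add: of_nat_diff)
    have "fi N t i - fi N s i - (t - s) * c =
        (real p * h + h - s) * D p + (\<Sum>j\<in>{Suc p..<q}. h * D j) + (t - real q * h) * D q"
    proof -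
      have sd: "(\<Sum>j\<in>{Suc p..<q}. h * (D j + c)) = (\<Sum>j\<in>{Suc p..<q}. h * D j) + (real q - real p - 1) * h * c"
        using card by (simp add: sum.distrib distrib_left)
      show ?thesis unfolding fs ft xq sd by (simp add: algebra_simps)
    qed
    also have "\<bar>\<dots>\<bar> \<le> (real p * h + h - s) * E + (\<Sum>j\<in>{Suc p..<q}. h * E) + (t - real q * h) * E"
    proof -
      have l1: "0 \<le> real p * h + h - s" using ps by (simp add: algebra_simps)
      have a1: "\<bar>(real p * h + h - s) * D p\<bar> \<le> (real p * h + h - s) * E"
        unfolding abs_mult using ED[of p] pq l1 by (simp add: mult_left_mono)
      have a2: "\<bar>\<Sum>j\<in>{Suc p..<q}. h * D j\<bar> \<le> (\<Sum>j\<in>{Suc p..<q}. h * E)"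
      proof -
        have "\<bar>\<Sum>j\<in>{Suc p..<q}. h * D j\<bar> \<le> (\<Sum>j\<in>{Suc p..<q}. \<bar>h * D j\<bar>)" by (rule sum_abs)
        also have "\<dots> \<le> (\<Sum>j\<in>{Suc p..<q}. h * E)"
        proof (rule sum_mono)
          fix j assume "j \<in> {Suc p..<q}"
          hence "\<bar>D j\<bar> \<le> E" using ED by simp
          thus "\<bar>h * D j\<bar> \<le> h * E" unfolding abs_mult using hp by (simp add: mult_left_mono)
        qed
        finally show ?thesis .
      qed
      have l3: "0 \<le> t - real q * h" using qt by simp
      have a3: "\<bar>(t - real q * h) * D q\<bar> \<le> (t - real q * h) * E"
        unfolding abs_mult using ED[of q] pq l3 by (simp add: mult_left_mono)
      have "\<bar>(real p * h + h - s) * D p + (\<Sum>j\<in>{Suc p..<q}. h * D j) + (t - real q * h) * D q\<bar>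
         \<le> \<bar>(real p * h + h - s) * D p\<bar> + \<bar>\<Sum>j\<in>{Suc p..<q}. h * D j\<bar> + \<bar>(t - real q * h) * D q\<bar>"
        by (rule order_trans[OF abs_triangle_ineq add_right_mono[OF abs_triangle_ineq]])
      thus ?thesis using a1 a2 a3 by linarith
    qed
    also have "\<dots> = (t - s) * E"
      using pq' by (simp add: of_nat_diff algebra_simps)
    finally show ?thesis .
  qed
qed

lemma fi_lip:
  assumes s0: "0 \<le> s" and st: "s \<le> t" and tT: "t \<le> T" and TN: "T \<le> real N" and i1: "i \<ge> 1"
  shows "\<bar>fi N t i - fi N s i\<bar> \<le> (t - s) * Lc i T"
proof -
  have "\<bar>fi N t i - fi N s i - (t - s) * 0\<bar> \<le> (t - s) * Lc i T"
  proof (rule fi_incr[OF s0 st])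
    fix m assume m: "nf N s \<le> m" "m \<le> nf N t"
    have "real m * hN N \<le> real (nf N t) * hN N" using m hN_pos[of N] by (intro mult_right_mono) auto
    also have "\<dots> \<le> t" using nf_props(1)[of t N] s0 st by simp
    finally have mT: "real m * hN N \<le> T" using tT by simp
    note sb = state_bounds[OF mT TN]
    show "\<bar>FN N (xs N m) i - 0\<bar> \<le> Lc i T"
      using FN_bound[of "xs N m" T N i] sb xs_supp i1 by auto
  qed
  thus ?thesis by simp
qed

end

lemma diag_conv:
  fixes X :: "nat \<Rightarrow> nat \<Rightarrow> real"
  assumes B: "\<And>k. \<exists>B. \<forall>n. \<bar>X k n\<bar> \<le> B"
  shows "\<exists>r. strict_mono r \<and> (\<forall>k. convergent (\<lambda>n. X k (r n)))"
proof -
  interpret subseqs "\<lambda>k s. convergent (\<lambda>n. X k (s n))"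
  proof
    fix k and s :: "nat \<Rightarrow> nat" assume "strict_mono s"
    obtain f where f: "strict_mono f" "monoseq (\<lambda>n. X k (s (f n)))"
      using seq_monosub[of "\<lambda>n. X k (s n)"] by blast
    obtain Bk where Bk: "\<forall>n. \<bar>X k n\<bar> \<le> Bk" using B by blast
    have "Bseq (\<lambda>n. X k (s (f n)))" using Bk by (intro BseqI'[of _ Bk]) auto
    hence "convergent (\<lambda>n. X k (s (f n)))" using f(2) by (rule Bseq_monoseq_convergent)
    thus "\<exists>r'. strict_mono r' \<and> convergent (\<lambda>n. X k ((s \<circ> r') n))" using f(1) by auto
  qed
  have "convergent (\<lambda>n. X k (diagseq n))" for k
  proof -
    have "convergent (\<lambda>n. X k ((diagseq \<circ> (+) (Suc k)) n))"
    proof (rule diagseq_holds)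
      fix r s n assume r: "strict_mono (r :: nat \<Rightarrow> nat)" and c: "convergent (\<lambda>m. X n (s m))"
      then obtain L where "(\<lambda>m. X n (s m)) \<longlonglongrightarrow> L" by (auto simp: convergent_def)
      hence "((\<lambda>m. X n (s m)) \<circ> r) \<longlonglongrightarrow> L" using r by (rule LIMSEQ_subseq_LIMSEQ)
      thus "convergent (\<lambda>m. X n ((s \<circ> r) m))" by (auto simp: convergent_def o_def)
    qed
    then obtain L where "(\<lambda>n. X k (diagseq (Suc k + n))) \<longlonglongrightarrow> L" by (auto simp: convergent_def)
    hence "(\<lambda>n. X k (diagseq (n + Suc k))) \<longlonglongrightarrow> L" by (simp add: add.commute)
    hence "(\<lambda>n. X k (diagseq n)) \<longlonglongrightarrow> L" by (rule LIMSEQ_offset)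
    thus ?thesis by (auto simp: convergent_def)
  qed
  thus ?thesis using subseq_diagseq by blast
qed

lemma tri3: fixes a b x y e :: real
  assumes "\<bar>a - x\<bar> < e/3" "\<bar>x - y\<bar> < e/3" "\<bar>b - y\<bar> < e/3" shows "\<bar>a - b\<bar> < e"
  using assms unfolding abs_less_iff by linarith

context scheme begin

definition Gb :: "real \<Rightarrow> real" where "Gb T = g 1 * Bd (T+1) + MG (T+1)"

lemma fi_fin_sum:
  assumes t0: "0 \<le> t" and tT: "t \<le> T" and TN: "T + 1 \<le> real N"
    and F: "finite F" and w: "\<And>i. i \<ge> 1 \<Longrightarrow> 0 \<le> w i"
  shows "(\<Sum>i\<in>F. w i * fi N t i) \<le> w 1 * fi N t 1 + (\<Sum>i\<in>{2..N}. w i * fi N t i)"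
proof -
  have nn: "\<And>i. 0 \<le> fi N t i" using fi_bounds[OF t0 tT TN] by simp
  have N1: "N \<ge> 1" using TN tT t0 by simp
  have "(\<Sum>i\<in>F. w i * fi N t i) = (\<Sum>i\<in>F \<inter> {1..N}. w i * fi N t i)"
  proof (rule sum.mono_neutral_right)
    show "\<forall>i\<in>F - F \<inter> {1..N}. w i * fi N t i = 0"
    proof
      fix i assume "i \<in> F - F \<inter> {1..N}"
      hence "i = 0 \<or> N < i" by auto
      thus "w i * fi N t i = 0" using fi_supp by simp
    qed
  qed (use F in auto)
  also have "\<dots> \<le> (\<Sum>i\<in>{1..N}. w i * fi N t i)"
    by (rule sum_mono2) (use w nn in \<open>auto intro!: mult_nonneg_nonneg\<close>)
  also have "{1..N} = insert 1 {2..N}" using N1 by auto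
  finally show ?thesis by simp
qed


lemma fi_comp:
  assumes t0: "0 \<le> t" and tT: "t \<le> T" and TN: "T + 1 \<le> real N"
  shows "0 \<le> fi N t i" "fi N t i \<le> Rb (T+1)"
proof -
  note fb = fi_bounds[OF t0 tT TN]
  show "0 \<le> fi N t i" using fb by simp
  have "\<forall>i. 0 \<le> fi N t i" using fb by simp
  from comp_bounds(1)[OF this fb(2) fb(3) fi_supp]
  show "fi N t i \<le> Rb (T+1)" by simp
qed

definition Xs :: "nat \<Rightarrow> nat \<Rightarrow> real" where
  "Xs k n = (case prod_decode k of (i, pq) \<Rightarrow> (case prod_decode pq of (p, q) \<Rightarrow>
     (if real p / real (Suc q) + 1 \<le> real n then fi n (real p / real (Suc q)) i else 0)))"

lemma Xs_enc: "Xs (prod_encode (i, prod_encode (p, q))) n =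
   (if real p / real (Suc q) + 1 \<le> real n then fi n (real p / real (Suc q)) i else 0)"
  unfolding Xs_def by simp

lemma Xs_bounded: "\<exists>B. \<forall>n. \<bar>Xs k n\<bar> \<le> B"
proof -
  obtain i pq where k: "prod_decode k = (i, pq)" by (cases "prod_decode k")
  obtain p q where pq: "prod_decode pq = (p, q)" by (cases "prod_decode pq")
  define \<tau> where "\<tau> = real p / real (Suc q)"
  have t0: "0 \<le> \<tau>" unfolding \<tau>_def by simp
  have "\<bar>Xs k n\<bar> \<le> Rb (\<tau> + 1)" for n
  proof (cases "\<tau> + 1 \<le> real n")
    case True
    hence "Xs k n = fi n \<tau> i" unfolding \<tau>_def by (simp add: Xs_def k pq)
    thus ?thesis using fi_comp[OF t0 order_refl True, of i] by simp
  next
    case False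
    hence "Xs k n = 0" unfolding \<tau>_def by (simp add: Xs_def k pq)
    moreover have "0 \<le> Rb (\<tau> + 1)"
      using fi_comp[OF t0 order_refl, of "nat \<lceil>\<tau> + 1\<rceil>" 0] by linarith
    ultimately show ?thesis by simp
  qed
  thus ?thesis by blast
qed

definition rr :: "nat \<Rightarrow> nat" where
  "rr = (SOME r. strict_mono r \<and> (\<forall>k. convergent (\<lambda>n. Xs k (r n))))"

lemma rr_props: "strict_mono rr" "\<And>k. convergent (\<lambda>n. Xs k (rr n))"
proof -
  have "\<exists>r. strict_mono r \<and> (\<forall>k. convergent (\<lambda>n. Xs k (r n)))"
    by (rule diag_conv[OF Xs_bounded])
  hence "strict_mono rr \<and> (\<forall>k. convergent (\<lambda>n. Xs k (rr n)))"
    unfolding rr_def by (rule someI_ex)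
  thus "strict_mono rr" "\<And>k. convergent (\<lambda>n. Xs k (rr n))" by auto
qed

lemma rr_ge: "n \<le> rr n" using rr_props(1) by (rule seq_suble)

lemma Lc_abs: "0 \<le> s \<Longrightarrow> s \<le> t \<Longrightarrow> t \<le> T \<Longrightarrow> T \<le> real N \<Longrightarrow> i \<ge> 1 \<Longrightarrow>
   \<bar>fi N t i - fi N s i\<bar> \<le> (t - s) * \<bar>Lc i T\<bar>"
  using fi_lip[of s t T N i] by (smt (verit) mult_left_mono abs_ge_self)

lemma conv_all:
  assumes t0: "0 \<le> t"
  shows "convergent (\<lambda>n. fi (rr n) t i)"
proof (cases "i = 0")
  case True thus ?thesis using fi_supp by (simp add: convergent_const)
next
  case False
  hence i1: "i \<ge> 1" by simp
  define T where "T = t + 1"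
  define L where "L = \<bar>Lc i T\<bar> + 1"
  have L1: "L \<ge> 1" unfolding L_def by simp
  have "Cauchy (\<lambda>n. fi (rr n) t i)"
    unfolding Cauchy_iff
  proof (intro allI impI)
    fix e :: real assume e: "0 < e"
    define q where "q = nat \<lceil>3 * L / e\<rceil>"
    define p where "p = nat \<lfloor>t * real (Suc q)\<rfloor>"
    define \<tau> where "\<tau> = real p / real (Suc q)"
    have sq: "real (Suc q) > 3 * L / e" unfolding q_def by linarith
    have sq0: "real (Suc q) > 0" by simp
    have tp0: "0 \<le> t * real (Suc q)" using t0 by simp
    have pe: "real p = real_of_int \<lfloor>t * real (Suc q)\<rfloor>" unfolding p_def using tp0 by simp
    have "real p \<le> t * real (Suc q)" unfolding pe by (rule of_int_floor_le)
    hence tau_le: "\<tau> \<le> t" unfolding \<tau>_def using sq0 by (simp add: divide_le_eq)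
    have "t * real (Suc q) < real p + 1" unfolding pe by (rule real_of_int_floor_add_one_gt)
    hence "t < (real p + 1) / real (Suc q)" using sq0 by (simp add: less_divide_eq)
    hence tau_gt: "t - \<tau> < 1 / real (Suc q)" unfolding \<tau>_def by (simp add: add_divide_distrib)
    have tau0: "0 \<le> \<tau>" unfolding \<tau>_def by simp
    have small: "(t - \<tau>) * L < e / 3"
    proof -
      have "(t - \<tau>) * L \<le> (1 / real (Suc q)) * L" using tau_gt L1 by (intro mult_right_mono) auto
      also have "\<dots> < e / 3" using sq e L1 sq0 by (simp add: field_simps)
      finally show ?thesis .
    qed
    define k where "k = prod_encode (i, prod_encode (p, q))"
    have "Cauchy (\<lambda>n. Xs k (rr n))" using rr_props(2)[of k] by (simp add: Cauchy_convergent_iff)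
    then obtain M1 where M1: "\<forall>m\<ge>M1. \<forall>n\<ge>M1. norm (Xs k (rr m) - Xs k (rr n)) < e/3"
      unfolding Cauchy_iff using e by (meson divide_pos_pos zero_less_numeral)
    define M2 where "M2 = nat \<lceil>T + 1\<rceil>"
    have near: "\<bar>fi (rr n) t i - Xs k (rr n)\<bar> < e/3" if n: "n \<ge> M2" for n
    proof -
      have "real n \<ge> T + 1" using n unfolding M2_def by linarith
      hence rn: "real (rr n) \<ge> T + 1" using rr_ge[of n] by (meson of_nat_le_iff order_trans)
      hence "\<tau> + 1 \<le> real (rr n)" using tau_le unfolding T_def by simp
      hence "Xs k (rr n) = fi (rr n) \<tau> i" unfolding k_def Xs_enc \<tau>_def by simp
      moreover have "\<bar>fi (rr n) t i - fi (rr n) \<tau> i\<bar> \<le> (t - \<tau>) * \<bar>Lc i T\<bar>"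
        using Lc_abs[OF tau0 tau_le, of T "rr n" i] rn i1 unfolding T_def by simp
      moreover have "(t - \<tau>) * \<bar>Lc i T\<bar> \<le> (t - \<tau>) * L" using tau_le unfolding L_def by (intro mult_left_mono) auto
      ultimately show ?thesis using small by simp
    qed
    show "\<exists>M. \<forall>m\<ge>M. \<forall>n\<ge>M. norm (fi (rr m) t i - fi (rr n) t i) < e"
    proof (intro exI[of _ "max M1 M2"] allI impI)
      fix m n assume m: "max M1 M2 \<le> m" and n: "max M1 M2 \<le> n"
      have f2: "\<bar>Xs k (rr m) - Xs k (rr n)\<bar> < e/3" using M1 m n by simp
      have f1: "\<bar>fi (rr m) t i - Xs k (rr m)\<bar> < e/3" using near m by simp
      have f3: "\<bar>fi (rr n) t i - Xs k (rr n)\<bar> < e/3" using near n by simp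
      show "norm (fi (rr m) t i - fi (rr n) t i) < e" unfolding real_norm_def by (rule tri3[OF f1 f2 f3])
    qed
  qed
  thus ?thesis by (simp add: Cauchy_convergent_iff)
qed

end

lemma summable_bdd:
  fixes f :: "'a \<Rightarrow> real"
  assumes nn: "\<And>x. x \<in> A \<Longrightarrow> 0 \<le> f x" and b: "\<And>F. finite F \<Longrightarrow> F \<subseteq> A \<Longrightarrow> sum f F \<le> M"
  shows "f summable_on A" "infsum f A \<le> M"
proof -
  have "bdd_above (sum f ` {F. F \<subseteq> A \<and> finite F})"
    using b by (intro bdd_aboveI[of _ M]) auto
  thus s: "f summable_on A" using nn by (intro nonneg_bdd_above_summable_on) auto
  show "infsum f A \<le> M" using s b by (rule infsum_le_finite_sums)
qed

lemma infsum_diff':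
  fixes f g :: "'a \<Rightarrow> real"
  assumes "f summable_on A" "g summable_on A"
  shows "infsum (\<lambda>x. f x - g x) A = infsum f A - infsum g A"
proof -
  have "(\<lambda>x. - g x) summable_on A" using assms(2) by (simp add: summable_on_uminus)
  hence "infsum (\<lambda>x. f x + - g x) A = infsum f A + infsum (\<lambda>x. - g x) A"
    using assms(1) by (intro infsum_add) auto
  thus ?thesis by (simp add: infsum_uminus)
qed

context scheme begin

definition Cl :: "real \<Rightarrow> nat \<Rightarrow> real" where "Cl t i = lim (\<lambda>n. fi (rr n) t i)"

lemma Cl_lim: "0 \<le> t \<Longrightarrow> (\<lambda>n. fi (rr n) t i) \<longlonglongrightarrow> Cl t i"
  unfolding Cl_def using conv_all by (simp add: convergent_LIMSEQ_iff)

lemma large: "\<exists>M. \<forall>n\<ge>M. T \<le> real (rr n)"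
proof (intro exI[of _ "nat \<lceil>T\<rceil>"] allI impI)
  fix n assume "nat \<lceil>T\<rceil> \<le> n"
  hence "T \<le> real n" by linarith
  thus "T \<le> real (rr n)" using rr_ge[of n] by (meson of_nat_le_iff order_trans)
qed

lemma Cl_le:
  assumes t0: "0 \<le> t" and ev: "\<And>N. T \<le> real N \<Longrightarrow> fi N t i \<le> B"
  shows "Cl t i \<le> B"
proof (rule LIMSEQ_le_const2[OF Cl_lim[OF t0]])
  obtain M where "\<forall>n\<ge>M. T \<le> real (rr n)" using large by blast
  thus "\<exists>M. \<forall>n\<ge>M. fi (rr n) t i \<le> B" using ev by blast
qed

lemma Cl_ge:
  assumes t0: "0 \<le> t" and ev: "\<And>N. T \<le> real N \<Longrightarrow> B \<le> fi N t i"
  shows "B \<le> Cl t i"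
proof (rule LIMSEQ_le_const[OF Cl_lim[OF t0]])
  obtain M where "\<forall>n\<ge>M. T \<le> real (rr n)" using large by blast
  thus "\<exists>M. \<forall>n\<ge>M. B \<le> fi (rr n) t i" using ev by blast
qed

lemma Cl_nn: "0 \<le> t \<Longrightarrow> 0 \<le> Cl t i"
  by (rule Cl_ge[where T="t+1"]) (use fi_comp[of t t] in auto)

lemma Cl_supp0: "0 \<le> t \<Longrightarrow> Cl t 0 = 0"
  using Cl_lim[of t 0] fi_supp[of 0] by (simp add: LIMSEQ_const_iff)

lemma Cl_0: assumes "i \<ge> 1" shows "Cl 0 i = c0 i"
proof -
  have "fi N 0 i = c0 i" if "real i \<le> real N" for N
  proof -
    have "nf N 0 = 0" unfolding nf_def by simp
    thus ?thesis using that assms unfolding fi_def by (simp add: xs_0 x0_def)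
  qed
  hence "Cl 0 i \<le> c0 i" "c0 i \<le> Cl 0 i" by (auto intro: Cl_le[where T="real i"] Cl_ge[where T="real i"])
  thus ?thesis by simp
qed

lemma Cl_lip:
  assumes s0: "0 \<le> s" and st: "s \<le> t" and tT: "t \<le> T" and i1: "i \<ge> 1"
  shows "\<bar>Cl t i - Cl s i\<bar> \<le> (t - s) * \<bar>Lc i T\<bar>"
proof -
  have t0: "0 \<le> t" using s0 st by simp
  have "(\<lambda>n. fi (rr n) t i - fi (rr n) s i) \<longlonglongrightarrow> Cl t i - Cl s i"
    by (intro tendsto_diff Cl_lim s0 t0)
  hence lim: "(\<lambda>n. \<bar>fi (rr n) t i - fi (rr n) s i\<bar>) \<longlonglongrightarrow> \<bar>Cl t i - Cl s i\<bar>" by (rule tendsto_rabs)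
  show ?thesis
  proof (rule LIMSEQ_le_const2[OF lim])
    obtain M where "\<forall>n\<ge>M. T \<le> real (rr n)" using large by blast
    thus "\<exists>M. \<forall>n\<ge>M. \<bar>fi (rr n) t i - fi (rr n) s i\<bar> \<le> (t - s) * \<bar>Lc i T\<bar>"
      using Lc_abs[OF s0 st tT _ i1] by blast
  qed
qed

lemma fi_wsum:
  fixes w :: "nat \<Rightarrow> real"
  assumes w0: "\<And>i. i \<ge> 1 \<Longrightarrow> 0 \<le> w i" and wm: "\<And>i. i \<ge> 1 \<Longrightarrow> w i \<le> w (i+1)"
    and wK: "\<And>i. i \<ge> 1 \<Longrightarrow> (w (i+1) - w i) * a i \<le> K * w i" and K0: "0 \<le> K"
    and W0: "\<And>N. (\<Sum>i\<in>{2..N}. w i * c0 i) \<le> W0"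
    and t0: "0 \<le> t" and tT: "t \<le> T" and TN: "T + 1 \<le> real N" and F: "finite F"
  shows "(\<Sum>i\<in>F. w i * fi N t i) \<le> w 1 * Bd (T+1) + MB w K W0 (T+1)"
proof -
  define n where "n = nf N t"
  have n1: "real n * hN N \<le> T + 1" using nf_props(1)[OF t0, of N] tT unfolding n_def by simp
  have n2: "real (Suc n) * hN N \<le> T + 1"
    using nf_props(1)[OF t0, of N] tT hN_le1[of N] unfolding n_def by (simp add: algebra_simps)
  have m1: "(\<Sum>i\<in>{2..N}. w i * xs N n i) \<le> MB w K W0 (T+1)"
    by (rule moment'[OF w0 wm wK K0 W0 TN n1])
  have m2: "(\<Sum>i\<in>{2..N}. w i * xs N (Suc n) i) \<le> MB w K W0 (T+1)"
    by (rule moment'[OF w0 wm wK K0 W0 TN n2])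
  have "(\<Sum>i\<in>{2..N}. w i * fi N t i) \<le> MB w K W0 (T+1)"
    by (rule fi_sum_le[OF t0]) (use m1 m2 n_def in auto)
  moreover have "w 1 * fi N t 1 \<le> w 1 * Bd (T+1)"
    using fi_bounds(2)[OF t0 tT TN] w0[of 1] by (intro mult_left_mono) auto
  moreover have "(\<Sum>i\<in>F. w i * fi N t i) \<le> w 1 * fi N t 1 + (\<Sum>i\<in>{2..N}. w i * fi N t i)"
    by (rule fi_fin_sum[OF t0 tT TN F w0])
  ultimately show ?thesis by simp
qed

lemma Cl_wsum:
  fixes w :: "nat \<Rightarrow> real"
  assumes w0: "\<And>i. i \<ge> 1 \<Longrightarrow> 0 \<le> w i" and wm: "\<And>i. i \<ge> 1 \<Longrightarrow> w i \<le> w (i+1)"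
    and wK: "\<And>i. i \<ge> 1 \<Longrightarrow> (w (i+1) - w i) * a i \<le> K * w i" and K0: "0 \<le> K"
    and W0: "\<And>N. (\<Sum>i\<in>{2..N}. w i * c0 i) \<le> W0"
    and t0: "0 \<le> t" and tT: "t \<le> T" and F: "finite F"
  shows "(\<Sum>i\<in>F. w i * Cl t i) \<le> w 1 * Bd (T+1) + MB w K W0 (T+1)"
proof (rule LIMSEQ_le_const2)
  show "(\<lambda>n. \<Sum>i\<in>F. w i * fi (rr n) t i) \<longlonglongrightarrow> (\<Sum>i\<in>F. w i * Cl t i)"
    by (intro tendsto_sum tendsto_mult_left Cl_lim t0)
  obtain M where "\<forall>n\<ge>M. T + 1 \<le> real (rr n)" using large by blast
  thus "\<exists>M. \<forall>n\<ge>M. (\<Sum>i\<in>F. w i * fi (rr n) t i) \<le> w 1 * Bd (T+1) + MB w K W0 (T+1)"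
    using fi_wsum[OF w0 wm wK K0 W0 t0 tT _ F] by blast
qed

lemma g_nn': "i \<ge> 1 \<Longrightarrow> 0 \<le> g i" by (rule g_nn)

lemma fi_gsum: "0 \<le> t \<Longrightarrow> t \<le> T \<Longrightarrow> T + 1 \<le> real N \<Longrightarrow> finite F \<Longrightarrow> (\<Sum>i\<in>F. g i * fi N t i) \<le> Gb T"
  unfolding Gb_def MG_def by (rule fi_wsum[OF g_nn gmono gK Kg0 g_init])

lemma Cl_gsum: "0 \<le> t \<Longrightarrow> t \<le> T \<Longrightarrow> finite F \<Longrightarrow> (\<Sum>i\<in>F. g i * Cl t i) \<le> Gb T"
  unfolding Gb_def MG_def by (rule Cl_wsum[OF g_nn gmono gK Kg0 g_init])

lemma tail_gen:
  fixes y :: "nat \<Rightarrow> real"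
  assumes nn: "\<And>i. 0 \<le> y i" and G: "(\<Sum>i\<in>F. g i * y i) \<le> G" and M: "0 < M"
    and K0: "\<forall>i\<ge>K0. M * real i powr \<alpha> \<le> g i" and F: "F \<subseteq> {K0..}"
  shows "(\<Sum>i\<in>F. real i powr \<alpha> * y i) \<le> G / M"
proof -
  have "(\<Sum>i\<in>F. real i powr \<alpha> * y i) \<le> (\<Sum>i\<in>F. (g i / M) * y i)"
  proof (rule sum_mono)
    fix i assume "i \<in> F"
    hence "M * real i powr \<alpha> \<le> g i" using K0 F by auto
    hence "real i powr \<alpha> \<le> g i / M" using M by (simp add: field_simps)
    thus "real i powr \<alpha> * y i \<le> g i / M * y i" using nn by (intro mult_right_mono) auto
  qed
  also have "\<dots> = (\<Sum>i\<in>F. g i * y i) / M" by (simp add: sum_divide_distrib)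
  also have "\<dots> \<le> G / M" using G M by (simp add: divide_right_mono)
  finally show ?thesis .
qed


lemma K0_ex: "0 < M \<Longrightarrow> \<exists>K0\<ge>1. \<forall>i\<ge>K0. M * real i powr \<alpha> \<le> g i"
proof -
  obtain K where "\<forall>i\<ge>K. M * real i powr \<alpha> \<le> g i" using gsup by blast
  thus ?thesis by (intro exI[of _ "max K 1"]) auto
qed

lemma Cl_lip':
  assumes "0 \<le> s" "s \<le> T" "0 \<le> t" "t \<le> T" "i \<ge> 1"
  shows "\<bar>Cl t i - Cl s i\<bar> \<le> \<bar>t - s\<bar> * \<bar>Lc i T\<bar>"
proof (cases "s \<le> t")
  case True thus ?thesis using Cl_lip[of s t T i] assms by simp
next
  case False thus ?thesis using Cl_lip[of t s T i] assms by (simp add: abs_minus_commute)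
qed

lemma Cl_inX: assumes t0: "0 \<le> t"
  shows "(\<lambda>k. real k powr \<alpha> * \<bar>Cl t k\<bar>) summable_on {1..}"
    "infsum (\<lambda>k. real k powr \<alpha> * \<bar>Cl t k\<bar>) {1..} \<le> Gb t"
proof -
  have b: "sum (\<lambda>k. real k powr \<alpha> * \<bar>Cl t k\<bar>) F \<le> Gb t" if "finite F" "F \<subseteq> {1..}" for F
  proof -
    have "sum (\<lambda>k. real k powr \<alpha> * \<bar>Cl t k\<bar>) F \<le> (\<Sum>k\<in>F. g k * Cl t k)"
    proof (rule sum_mono)
      fix k assume "k \<in> F"
      hence "k \<ge> 1" using that by auto
      thus "real k powr \<alpha> * \<bar>Cl t k\<bar> \<le> g k * Cl t k" using gpow[of k] Cl_nn[OF t0, of k]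
        by (simp add: mult_right_mono)
    qed
    also have "\<dots> \<le> Gb t" using Cl_gsum[OF t0 order_refl that(1)] .
    finally show ?thesis .
  qed
  show "(\<lambda>k. real k powr \<alpha> * \<bar>Cl t k\<bar>) summable_on {1..}"
    by (rule summable_bdd(1)[OF _ b]) auto
  show "infsum (\<lambda>k. real k powr \<alpha> * \<bar>Cl t k\<bar>) {1..} \<le> Gb t"
    by (rule summable_bdd(2)[OF _ b]) auto
qed

lemma Cl_mod:
  assumes t: "0 \<le> t" "t \<le> T" and t0: "0 \<le> t0" "t0 \<le> T" and M: "0 < M" and K0: "K0 \<ge> 1"
    and gK0: "\<forall>i\<ge>K0. M * real i powr \<alpha> \<le> g i"
  shows "(\<lambda>k. real k powr \<alpha> * \<bar>Cl t k - Cl t0 k\<bar>) summable_on {1..}"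
    "Xnorm \<alpha> (\<lambda>k. Cl t k - Cl t0 k) \<le> (\<Sum>k\<in>{1..<K0}. real k powr \<alpha> * \<bar>Lc k T\<bar>) * \<bar>t - t0\<bar> + 2 * Gb T / M"
proof -
  define f where "f k = real k powr \<alpha> * \<bar>Cl t k - Cl t0 k\<bar>" for k
  define B where "B = (\<Sum>k\<in>{1..<K0}. real k powr \<alpha> * \<bar>Lc k T\<bar>) * \<bar>t - t0\<bar> + 2 * Gb T / M"
  have b: "sum f F \<le> B" if F: "finite F" "F \<subseteq> {1..}" for F
  proof -
    have "sum f F = sum f (F \<inter> {..<K0}) + sum f (F - {..<K0})" using F(1) by (rule sum.Int_Diff)
    also have "sum f (F \<inter> {..<K0}) \<le> sum f {1..<K0}"
      using F by (intro sum_mono2) (auto simp: f_def)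
    also have "\<dots> \<le> (\<Sum>k\<in>{1..<K0}. real k powr \<alpha> * \<bar>Lc k T\<bar> * \<bar>t - t0\<bar>)"
    proof (rule sum_mono)
      fix k assume "k \<in> {1..<K0}"
      hence k1: "k \<ge> 1" by simp
      have "\<bar>Cl t k - Cl t0 k\<bar> \<le> \<bar>t - t0\<bar> * \<bar>Lc k T\<bar>" using Cl_lip'[OF t0 t k1] .
      hence "real k powr \<alpha> * \<bar>Cl t k - Cl t0 k\<bar> \<le> real k powr \<alpha> * (\<bar>t - t0\<bar> * \<bar>Lc k T\<bar>)"
        by (intro mult_left_mono) auto
      thus "f k \<le> real k powr \<alpha> * \<bar>Lc k T\<bar> * \<bar>t - t0\<bar>" unfolding f_def
        by (simp add: mult.commute mult.left_commute)
    qed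
    also have "\<dots> = (\<Sum>k\<in>{1..<K0}. real k powr \<alpha> * \<bar>Lc k T\<bar>) * \<bar>t - t0\<bar>"
      by (simp add: sum_distrib_right)
    also have "sum f (F - {..<K0}) \<le> (\<Sum>k\<in>F - {..<K0}. real k powr \<alpha> * Cl t k) + (\<Sum>k\<in>F - {..<K0}. real k powr \<alpha> * Cl t0 k)"
      unfolding sum.distrib[symmetric] f_def
    proof (rule sum_mono)
      fix k
      have "\<bar>Cl t k - Cl t0 k\<bar> \<le> Cl t k + Cl t0 k" using Cl_nn[OF t(1), of k] Cl_nn[OF t0(1), of k] by simp
      thus "real k powr \<alpha> * \<bar>Cl t k - Cl t0 k\<bar> \<le> real k powr \<alpha> * Cl t k + real k powr \<alpha> * Cl t0 k"
        by (simp add: distrib_left[symmetric] mult_left_mono)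
    qed
    also have "(\<Sum>k\<in>F - {..<K0}. real k powr \<alpha> * Cl t k) \<le> Gb T / M"
      by (rule tail_gen[OF Cl_nn[OF t(1)] Cl_gsum[OF t(1) t(2)] M gK0]) (use F in auto)
    also have "(\<Sum>k\<in>F - {..<K0}. real k powr \<alpha> * Cl t0 k) \<le> Gb T / M"
      by (rule tail_gen[OF Cl_nn[OF t0(1)] Cl_gsum[OF t0(1) t0(2)] M gK0]) (use F in auto)
    finally show ?thesis unfolding B_def by simp
  qed
  have nn: "\<And>k. 0 \<le> f k" unfolding f_def by simp
  show "(\<lambda>k. real k powr \<alpha> * \<bar>Cl t k - Cl t0 k\<bar>) summable_on {1..}"
    using summable_bdd(1)[OF _ b] nn unfolding f_def by blast
  show "Xnorm \<alpha> (\<lambda>k. Cl t k - Cl t0 k) \<le> B" unfolding Xnorm_def B_def[symmetric]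
    using summable_bdd(2)[OF _ b] nn unfolding f_def by blast
qed

lemma Gb_nn: "0 \<le> T \<Longrightarrow> 0 \<le> Gb T"
  using Cl_gsum[of 0 T "{}"] by simp

lemma Xnorm_nn: "0 \<le> Xnorm \<alpha> x" unfolding Xnorm_def by (intro infsum_nonneg) simp

lemma Cl_cont_eps:
  assumes t0: "0 \<le> t0" and e: "0 < e"
  shows "\<exists>d>0. \<forall>t. 0 \<le> t \<and> \<bar>t - t0\<bar> < d \<longrightarrow> Xnorm \<alpha> (\<lambda>k. Cl t k - Cl t0 k) < e"
proof -
  define T where "T = t0 + 1"
  define M where "M = 4 * (Gb T + 1) / e"
  have G0': "0 \<le> Gb T" using Gb_nn[of T] t0 unfolding T_def by simp
  have M0: "0 < M" unfolding M_def using G0' e by simp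
  obtain K0 where K0: "K0 \<ge> 1" "\<forall>i\<ge>K0. M * real i powr \<alpha> \<le> g i" using K0_ex[OF M0] by blast
  define \<Lambda> where "\<Lambda> = (\<Sum>k\<in>{1..<K0}. real k powr \<alpha> * \<bar>Lc k T\<bar>)"
  have L0: "0 \<le> \<Lambda>" unfolding \<Lambda>_def by (intro sum_nonneg) simp
  define d where "d = min 1 (e / (2 * (\<Lambda> + 1)))"
  have d0: "0 < d" unfolding d_def using e L0 by simp
  show ?thesis
  proof (intro exI[of _ d] conjI allI impI d0)
    fix t assume ta: "0 \<le> t \<and> \<bar>t - t0\<bar> < d"
    hence tT: "t \<le> T" unfolding T_def d_def by linarith
    have "Xnorm \<alpha> (\<lambda>k. Cl t k - Cl t0 k) \<le> \<Lambda> * \<bar>t - t0\<bar> + 2 * Gb T / M"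
      unfolding \<Lambda>_def using Cl_mod(2)[of t T t0 M K0] ta tT t0 M0 K0 unfolding T_def by simp
    also have "\<Lambda> * \<bar>t - t0\<bar> \<le> \<Lambda> * (e / (2 * (\<Lambda> + 1)))"
      using ta L0 unfolding d_def by (intro mult_left_mono) auto
    also have "\<dots> < e / 2" using L0 e by (simp add: field_simps)
    also have "2 * Gb T / M = Gb T * e / (2 * (Gb T + 1))" unfolding M_def using G0' e by (simp add: field_simps)
    also have "\<dots> < e / 2" using G0' e by (simp add: field_simps)
    finally show "Xnorm \<alpha> (\<lambda>k. Cl t k - Cl t0 k) < e" by simp
  qed
qed

lemma Cl_cont:
  assumes t0: "0 \<le> t0"
  shows "((\<lambda>t. Xnorm \<alpha> (\<lambda>k. Cl t k - Cl t0 k)) \<longlongrightarrow> 0) (at t0 within {0..})"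
  unfolding tendsto_iff
proof (intro allI impI)
  fix e :: real assume e: "0 < e"
  obtain d where d: "d > 0" "\<forall>t. 0 \<le> t \<and> \<bar>t - t0\<bar> < d \<longrightarrow> Xnorm \<alpha> (\<lambda>k. Cl t k - Cl t0 k) < e"
    using Cl_cont_eps[OF t0 e] by blast
  show "\<forall>\<^sub>F t in at t0 within {0..}. dist (Xnorm \<alpha> (\<lambda>k. Cl t k - Cl t0 k)) 0 < e"
    unfolding eventually_at
    using d Xnorm_nn by (intro exI[of _ d]) (auto simp: dist_real_def)
qed


lemma a_le_g: "i \<ge> 1 \<Longrightarrow> a i \<le> A * g i"
  using a_le[of i] gpow[of i] A0 by (meson mult_left_mono order_trans)

lemma a_abs_le: "i \<ge> 1 \<Longrightarrow> \<bar>a i * x\<bar> \<le> A * (real i powr \<alpha> * \<bar>x\<bar>)"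
  using a_le[of i] a_nn[of i] mult_right_mono[of "a i" "A * real i powr \<alpha>" "\<bar>x\<bar>"]
  by (simp add: abs_mult mult.assoc)

lemma Cl_a_summable:
  assumes s0: "0 \<le> s" shows "(\<lambda>j. a j * Cl s j) summable_on {1..}"
proof (rule summable_bdd(1))
  show "\<And>x. x \<in> {1..} \<Longrightarrow> 0 \<le> a x * Cl s x" using a_nn Cl_nn[OF s0] by simp
  fix F :: "nat set" assume F: "finite F" "F \<subseteq> {1..}"
  have "sum (\<lambda>j. a j * Cl s j) F \<le> (\<Sum>j\<in>F. A * (g j * Cl s j))"
  proof (rule sum_mono)
    fix j assume "j \<in> F" hence j: "j \<ge> 1" using F by auto
    show "a j * Cl s j \<le> A * (g j * Cl s j)" using a_le_g[OF j] Cl_nn[OF s0, of j]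
      by (simp add: mult_right_mono mult.assoc[symmetric])
  qed
  also have "\<dots> = A * (\<Sum>j\<in>F. g j * Cl s j)" by (simp add: sum_distrib_left)
  also have "\<dots> \<le> A * Gb s" using Cl_gsum[OF s0 order_refl F(1)] A0 by (intro mult_left_mono)
  finally show "sum (\<lambda>j. a j * Cl s j) F \<le> A * Gb s" .
qed

lemma asum_diff_bound:
  assumes s0: "0 \<le> s" and t0: "0 \<le> t"
  shows "\<bar>asum a (Cl t) - asum a (Cl s)\<bar> \<le> A * Xnorm \<alpha> (\<lambda>k. Cl t k - Cl s k)"
proof -
  define T where "T = max s t"
  obtain K0 where K0: "K0 \<ge> 1" "\<forall>i\<ge>K0. 1 * real i powr \<alpha> \<le> g i" using K0_ex[of 1] by auto
  have sX: "(\<lambda>k. real k powr \<alpha> * \<bar>Cl t k - Cl s k\<bar>) summable_on {1..}"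
    using Cl_mod(1)[of t T s 1 K0] K0 s0 t0 unfolding T_def by auto
  define h where "h j = a j * Cl t j - a j * Cl s j" for j
  have hb: "\<bar>h j\<bar> \<le> A * (real j powr \<alpha> * \<bar>Cl t j - Cl s j\<bar>)" if "j \<in> {1..}" for j
    unfolding h_def using a_abs_le[of j "Cl t j - Cl s j"] that by (simp add: algebra_simps)
  have sA: "(\<lambda>j. A * (real j powr \<alpha> * \<bar>Cl t j - Cl s j\<bar>)) summable_on {1..}"
    using sX by (rule summable_on_cmult_right)
  have habs: "(\<lambda>j. \<bar>h j\<bar>) summable_on {1..}"
    by (rule summable_on_comparison_test[OF sA]) (use hb in auto)
  have "asum a (Cl t) - asum a (Cl s) = infsum h {1..}"
    unfolding asum_def h_def by (rule infsum_diff'[symmetric]) (intro Cl_a_summable t0 s0)+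
  also have "\<bar>\<dots>\<bar> \<le> infsum (\<lambda>j. \<bar>h j\<bar>) {1..}"
    using norm_infsum_bound[of h "{1..}"] habs by simp
  also have "\<dots> \<le> infsum (\<lambda>j. A * (real j powr \<alpha> * \<bar>Cl t j - Cl s j\<bar>)) {1..}"
    by (rule infsum_mono[OF habs sA]) (use hb in auto)
  also have "\<dots> = A * Xnorm \<alpha> (\<lambda>k. Cl t k - Cl s k)"
    unfolding Xnorm_def by (rule infsum_cmult_right') 
  finally show ?thesis .
qed

lemma asum_cont:
  assumes s0: "0 \<le> s0"
  shows "((\<lambda>s. asum a (Cl s)) \<longlongrightarrow> asum a (Cl s0)) (at s0 within {0..})"
proof -
  have "((\<lambda>s. asum a (Cl s) - asum a (Cl s0)) \<longlongrightarrow> 0) (at s0 within {0..})"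
  proof (rule Lim_null_comparison)
    show "\<forall>\<^sub>F s in at s0 within {0..}. norm (asum a (Cl s) - asum a (Cl s0)) \<le> A * Xnorm \<alpha> (\<lambda>k. Cl s k - Cl s0 k)"
      unfolding eventually_at_filter using asum_diff_bound[OF s0] by (auto intro!: always_eventually)
    show "((\<lambda>s. A * Xnorm \<alpha> (\<lambda>k. Cl s k - Cl s0 k)) \<longlongrightarrow> 0) (at s0 within {0..})"
      using tendsto_mult_left[OF Cl_cont[OF s0], of A] by simp
  qed
  thus ?thesis by (rule LIM_zero_cancel)
qed

lemma Cl_comp_cont:
  assumes s0: "0 \<le> s0" and i1: "i \<ge> 1"
  shows "((\<lambda>s. Cl s i) \<longlongrightarrow> Cl s0 i) (at s0 within {0..})"
proof -
  define T where "T = s0 + 1"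
  have "((\<lambda>s. Cl s i - Cl s0 i) \<longlongrightarrow> 0) (at s0 within {0..})"
  proof (rule Lim_null_comparison)
    have "\<forall>\<^sub>F s in at s0 within {0..}. s \<in> {0..} \<and> s \<le> T"
      unfolding eventually_at T_def by (intro exI[of _ 1]) (auto simp: dist_real_def)
    thus "\<forall>\<^sub>F s in at s0 within {0..}. norm (Cl s i - Cl s0 i) \<le> \<bar>s - s0\<bar> * \<bar>Lc i T\<bar>"
      by eventually_elim (use Cl_lip'[OF s0 _ _ _ i1] s0 T_def in auto)
    have "((\<lambda>s. \<bar>s - s0\<bar> * \<bar>Lc i T\<bar>) \<longlongrightarrow> \<bar>s0 - s0\<bar> * \<bar>Lc i T\<bar>) (at s0 within {0..})"
      by (intro tendsto_intros)
    thus "((\<lambda>s. \<bar>s - s0\<bar> * \<bar>Lc i T\<bar>) \<longlongrightarrow> 0) (at s0 within {0..})" by simp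
  qed
  thus ?thesis by (rule LIM_zero_cancel)
qed

end

context scheme begin

definition Hf :: "real \<Rightarrow> real" where "Hf s = Cl s 1 * asum a (Cl s) + a 1 * (Cl s 1)^2"

definition G :: "nat \<Rightarrow> real \<Rightarrow> real" where
  "G i s = (if i = 1 then lam - Hf s else flux a b (Cl s) (i-1) - flux a b (Cl s) i)"

lemma sumN_lim:
  assumes s0: "0 \<le> s"
  shows "(\<lambda>n. \<Sum>j\<in>{1..rr n}. a j * fi (rr n) s j) \<longlonglongrightarrow> asum a (Cl s)"
  unfolding LIMSEQ_iff
proof (intro allI impI)
  fix e :: real assume e: "0 < e"
  have G0': "0 \<le> Gb s" using Gb_nn s0 by simp
  define M where "M = 3 * (A + 1) * (Gb s + 1) / e"
  have M0: "0 < M" unfolding M_def using A0 G0' e by simp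
  obtain K0 where K0: "K0 \<ge> 1" "\<forall>i\<ge>K0. M * real i powr \<alpha> \<le> g i" using K0_ex[OF M0] by blast
  have small: "A * (Gb s / M) < e / 3"
  proof -
    have pos: "0 < (A + 1) * (Gb s + 1)" using A0 G0' by simp
    have "(A + 1) * (Gb s + 1) = A * Gb s + (A + Gb s + 1)" by (simp add: algebra_simps)
    hence q: "A * Gb s < (A + 1) * (Gb s + 1)" using A0 G0' by linarith
    have q1: "A * Gb s / ((A + 1) * (Gb s + 1)) < 1" using q pos by (simp add: divide_less_eq)
    have "A * (Gb s / M) = (A * Gb s / ((A + 1) * (Gb s + 1))) * (e / 3)" unfolding M_def using e pos by (simp add: field_simps)
    also have "\<dots> < 1 * (e / 3)" using q1 e by (intro mult_strict_right_mono) auto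
    finally show ?thesis by simp
  qed
  define P where "P = (\<Sum>j\<in>{1..<K0}. a j * Cl s j)"
  define tl where "tl = infsum (\<lambda>j. a j * Cl s j) {K0..}"
  have sm: "(\<lambda>j. a j * Cl s j) summable_on {1..}" by (rule Cl_a_summable[OF s0])
  have L: "asum a (Cl s) = P + tl"
  proof -
    have u: "{1..} = {1..<K0} \<union> {K0..}" using K0 by auto
    have "asum a (Cl s) = infsum (\<lambda>j. a j * Cl s j) ({1..<K0} \<union> {K0..})" unfolding asum_def u[symmetric] ..
    also have "\<dots> = infsum (\<lambda>j. a j * Cl s j) {1..<K0} + tl" unfolding tl_def
      by (rule infsum_Un_disjoint) (use sm u in \<open>auto intro: summable_on_subset\<close>)
    finally show ?thesis unfolding P_def by simp
  qed
  have tlb: "0 \<le> tl \<and> tl \<le> A * (Gb s / M)"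
  proof -
    have b: "sum (\<lambda>j. a j * Cl s j) F \<le> A * (Gb s / M)" if F: "finite F" "F \<subseteq> {K0..}" for F
    proof -
      have "sum (\<lambda>j. a j * Cl s j) F \<le> (\<Sum>j\<in>F. A * (real j powr \<alpha> * Cl s j))"
      proof (rule sum_mono)
        fix j assume "j \<in> F" hence "j \<ge> 1" using F K0 by auto
        thus "a j * Cl s j \<le> A * (real j powr \<alpha> * Cl s j)"
          using a_abs_le[of j "Cl s j"] Cl_nn[OF s0, of j] a_nn[of j] by simp
      qed
      also have "\<dots> = A * (\<Sum>j\<in>F. real j powr \<alpha> * Cl s j)" by (simp add: sum_distrib_left)
      also have "\<dots> \<le> A * (Gb s / M)"
        using tail_gen[OF Cl_nn[OF s0] Cl_gsum[OF s0 order_refl F(1)] M0 K0(2) F(2)] A0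
        by (intro mult_left_mono) auto
      finally show ?thesis .
    qed
    have "0 \<le> tl" unfolding tl_def using a_nn Cl_nn[OF s0] K0 by (intro infsum_nonneg) auto
    moreover have "tl \<le> A * (Gb s / M)" unfolding tl_def
      by (rule summable_bdd(2)[OF _ b]) (use a_nn Cl_nn[OF s0] K0 in auto)
    ultimately show ?thesis by simp
  qed
  have "(\<lambda>n. \<Sum>j\<in>{1..<K0}. a j * fi (rr n) s j) \<longlonglongrightarrow> P"
    unfolding P_def by (intro tendsto_sum tendsto_mult_left Cl_lim s0)
  then obtain n1 where n1: "\<forall>n\<ge>n1. norm ((\<Sum>j\<in>{1..<K0}. a j * fi (rr n) s j) - P) < e/3"
    unfolding LIMSEQ_iff using e by (meson divide_pos_pos zero_less_numeral)
  obtain n2 where n2: "\<forall>n\<ge>n2. max (real K0) (s + 1) \<le> real (rr n)" using large by blast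
  show "\<exists>no. \<forall>n\<ge>no. norm ((\<Sum>j\<in>{1..rr n}. a j * fi (rr n) s j) - asum a (Cl s)) < e"
  proof (intro exI[of _ "max n1 n2"] allI impI)
    fix n assume n: "max n1 n2 \<le> n"
    define N where "N = rr n"
    have NK: "K0 \<le> N" and Ns: "s + 1 \<le> real N" using n2 n unfolding N_def by auto
    have sp: "{1..N} = {1..<K0} \<union> {K0..N}" using NK K0 by auto
    have "(\<Sum>j\<in>{1..N}. a j * fi N s j) = (\<Sum>j\<in>{1..<K0}. a j * fi N s j) + (\<Sum>j\<in>{K0..N}. a j * fi N s j)"
      unfolding sp by (rule sum.union_disjoint) auto
    moreover have tn: "0 \<le> (\<Sum>j\<in>{K0..N}. a j * fi N s j) \<and> (\<Sum>j\<in>{K0..N}. a j * fi N s j) \<le> A * (Gb s / M)"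
    proof -
      have nnf: "\<And>j. 0 \<le> fi N s j" using fi_comp(1)[OF s0 order_refl Ns] .
      have "(\<Sum>j\<in>{K0..N}. a j * fi N s j) \<le> (\<Sum>j\<in>{K0..N}. A * (real j powr \<alpha> * fi N s j))"
      proof (rule sum_mono)
        fix j assume "j \<in> {K0..N}" hence "j \<ge> 1" using K0 by auto
        thus "a j * fi N s j \<le> A * (real j powr \<alpha> * fi N s j)"
          using a_abs_le[of j "fi N s j"] nnf[of j] a_nn[of j] by simp
      qed
      also have "\<dots> = A * (\<Sum>j\<in>{K0..N}. real j powr \<alpha> * fi N s j)" by (simp add: sum_distrib_left)
      also have "\<dots> \<le> A * (Gb s / M)"
        using tail_gen[OF nnf fi_gsum[OF s0 order_refl Ns, of "{K0..N}"] M0 K0(2)] A0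
        by (intro mult_left_mono) auto
      finally have "(\<Sum>j\<in>{K0..N}. a j * fi N s j) \<le> A * (Gb s / M)" .
      moreover have "0 \<le> (\<Sum>j\<in>{K0..N}. a j * fi N s j)" using a_nn nnf K0 by (intro sum_nonneg) auto
      ultimately show ?thesis by simp
    qed
    moreover have "norm ((\<Sum>j\<in>{1..<K0}. a j * fi N s j) - P) < e/3" using n1 n unfolding N_def by simp
    ultimately have f1: "(\<Sum>j\<in>{1..N}. a j * fi N s j) = (\<Sum>j\<in>{1..<K0}. a j * fi N s j) + (\<Sum>j\<in>{K0..N}. a j * fi N s j)"
      and f2: "0 \<le> (\<Sum>j\<in>{K0..N}. a j * fi N s j)" "(\<Sum>j\<in>{K0..N}. a j * fi N s j) \<le> A * (Gb s / M)"
      and f3: "- (e/3) < (\<Sum>j\<in>{1..<K0}. a j * fi N s j) - P" "(\<Sum>j\<in>{1..<K0}. a j * fi N s j) - P < e/3"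
      unfolding real_norm_def abs_less_iff by auto
    show "norm ((\<Sum>j\<in>{1..rr n}. a j * fi (rr n) s j) - asum a (Cl s)) < e"
      unfolding N_def[symmetric] L real_norm_def abs_less_iff f1 using f2 f3 tlb small by linarith
  qed
qed

lemma FN_lim:
  assumes s0: "0 \<le> s" and i1: "i \<ge> 1"
  shows "(\<lambda>n. FN (rr n) (fi (rr n) s) i) \<longlonglongrightarrow> G i s"
proof (cases "i = 1")
  case True
  have Gi: "G i s = lam - (Cl s 1 * asum a (Cl s) + a 1 * (Cl s 1)^2)" using True by (simp add: G_def Hf_def)
  have lim: "(\<lambda>n. lam - (fi (rr n) s 1 * (\<Sum>j\<in>{1..rr n}. a j * fi (rr n) s j) + a 1 * (fi (rr n) s 1)^2))
      \<longlonglongrightarrow> G i s"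
    unfolding Gi by (intro tendsto_intros Cl_lim s0 sumN_lim)
  obtain n0 where n0: "\<forall>n\<ge>n0. 1 \<le> real (rr n)" using large by blast
  show ?thesis
  proof (rule Lim_transform_eventually[OF lim])
    show "\<forall>\<^sub>F n in sequentially. lam - (fi (rr n) s 1 * (\<Sum>j\<in>{1..rr n}. a j * fi (rr n) s j) + a 1 * (fi (rr n) s 1)^2)
       = FN (rr n) (fi (rr n) s) i"
      unfolding eventually_sequentially using n0 True
      by (intro exI[of _ n0]) (auto simp: FN_def power2_eq_square algebra_simps)
  qed
next
  case False
  hence i2: "i \<ge> 2" using i1 by simp
  have Gi: "G i s = flux a b (Cl s) (i-1) - flux a b (Cl s) i" using False by (simp add: G_def)
  have lim: "(\<lambda>n. flux a b (fi (rr n) s) (i-1) - flux a b (fi (rr n) s) i) \<longlonglongrightarrow> G i s"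
    unfolding Gi flux_def by (intro tendsto_intros Cl_lim s0)
  obtain n0 where n0: "\<forall>n\<ge>n0. real i + 1 \<le> real (rr n)" using large by blast
  show ?thesis
  proof (rule Lim_transform_eventually[OF lim])
    show "\<forall>\<^sub>F n in sequentially. flux a b (fi (rr n) s) (i-1) - flux a b (fi (rr n) s) i = FN (rr n) (fi (rr n) s) i"
      unfolding eventually_sequentially
    proof (intro exI[of _ n0] allI impI)
      fix n assume nn0: "n0 \<le> n"
      have "real i + 1 \<le> real (rr n)" using n0 nn0 by blast
      hence "real (i + 1) \<le> real (rr n)" by simp
      hence ii: "i + 1 \<le> rr n" by (simp only: of_nat_le_iff)
      have c1: "i - 1 < rr n" "i < rr n" "i - 1 + 1 = i" "\<not> i = 1" "2 \<le> i \<and> i \<le> rr n"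
        using ii i2 by auto
      show "flux a b (fi (rr n) s) (i-1) - flux a b (fi (rr n) s) i = FN (rr n) (fi (rr n) s) i"
        unfolding FN_def JN_def flux_def using c1 by simp
    qed
  qed
qed

end

lemma prod_diff:
  fixes x1 y1 x2 y2 R :: real
  assumes "\<bar>x1\<bar> \<le> R" "\<bar>y2\<bar> \<le> R"
  shows "\<bar>x1 * y1 - x2 * y2\<bar> \<le> R * (\<bar>x1 - x2\<bar> + \<bar>y1 - y2\<bar>)"
proof -
  have "x1 * y1 - x2 * y2 = x1 * (y1 - y2) + (x1 - x2) * y2" by (simp add: algebra_simps)
  hence "\<bar>x1 * y1 - x2 * y2\<bar> \<le> \<bar>x1\<bar> * \<bar>y1 - y2\<bar> + \<bar>x1 - x2\<bar> * \<bar>y2\<bar>"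
    by (metis abs_mult abs_triangle_ineq)
  also have "\<dots> \<le> R * \<bar>y1 - y2\<bar> + \<bar>x1 - x2\<bar> * R"
    using assms by (intro add_mono mult_mono) auto
  finally show ?thesis by (simp add: algebra_simps)
qed

lemma abs_four_bound:
  fixes p q r s x y z w :: real
  assumes "0 \<le> p" "0 \<le> q" "0 \<le> r" "0 \<le> s"
  shows "\<bar>p * x - q * y - r * z + s * w\<bar> \<le> p * \<bar>x\<bar> + q * \<bar>y\<bar> + r * \<bar>z\<bar> + s * \<bar>w\<bar>"
proof -
  have "\<bar>p * x - q * y - r * z + s * w\<bar> \<le> \<bar>p * x - q * y - r * z\<bar> + \<bar>s * w\<bar>" by (rule abs_triangle_ineq)
  also have "\<bar>p * x - q * y - r * z\<bar> \<le> \<bar>p * x - q * y\<bar> + \<bar>r * z\<bar>" by (rule abs_triangle_ineq4)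
  also have "\<bar>p * x - q * y\<bar> \<le> \<bar>p * x\<bar> + \<bar>q * y\<bar>" by (rule abs_triangle_ineq4)
  finally show ?thesis using assms by (simp add: abs_mult)
qed

context scheme begin

lemma fi_diff:
  assumes "0 \<le> \<tau>" "\<tau> \<le> T" "0 \<le> \<tau>'" "\<tau>' \<le> T" "T \<le> real N" "j \<ge> 1"
  shows "\<bar>fi N \<tau> j - fi N \<tau>' j\<bar> \<le> \<bar>\<tau> - \<tau>'\<bar> * \<bar>Lc j T\<bar>"
proof (cases "\<tau>' \<le> \<tau>")
  case True thus ?thesis using Lc_abs[of \<tau>' \<tau> T N j] assms by simp
next
  case False thus ?thesis using Lc_abs[of \<tau> \<tau>' T N j] assms by (simp add: abs_minus_commute)
qed

lemma FN_mid_expl: "2 \<le> i \<Longrightarrow> i + 1 \<le> N \<Longrightarrow>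
   FN N y i = a (i-1) * (y 1 * y (i-1)) - b i * y i - a i * (y 1 * y i) + b (i+1) * y (i+1)"
proof -
  assume i: "2 \<le> i" "i + 1 \<le> N"
  have c1: "i - 1 < N" "i < N" "i - 1 + 1 = i" "\<not> i = 1" "2 \<le> i \<and> i \<le> N" using i by auto
  show ?thesis unfolding FN_def JN_def using c1 by (simp add: algebra_simps)
qed

lemma FN_one_expl: "1 \<le> N \<Longrightarrow> FN N y 1 = lam - (y 1 * (\<Sum>j\<in>{1..N}. a j * y j) + a 1 * (y 1 * y 1))"
  unfolding FN_def by (simp add: algebra_simps)

lemma FN_equi_mid:
  assumes T0: "0 \<le> T" and i2: "i \<ge> 2" and e: "0 < e"
  shows "\<exists>d>0. \<forall>N \<tau> \<tau>'. T + 1 \<le> real N \<and> i + 1 \<le> N \<and> 0 \<le> \<tau> \<and> \<tau> \<le> T \<and> 0 \<le> \<tau>' \<and> \<tau>' \<le> T \<and>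
      \<bar>\<tau> - \<tau>'\<bar> \<le> d \<longrightarrow> \<bar>FN N (fi N \<tau>) i - FN N (fi N \<tau>') i\<bar> \<le> e"
proof -
  define R where "R = Rb (T+1)"
  define L where "L j = \<bar>Lc j T\<bar>" for j
  define \<Lambda> where "\<Lambda> = a (i-1) * R * (L 1 + L (i-1)) + b i * L i + a i * R * (L 1 + L i) + b (i+1) * L (i+1)"
  have ab: "0 \<le> a (i-1)" "0 \<le> a i" "0 \<le> b i" "0 \<le> b (i+1)" using a_nn b_nn i2 by auto
  have R0: "0 \<le> R" unfolding R_def using fi_comp[OF order_refl T0, of "nat \<lceil>T+1\<rceil>" 0] by linarith
  have L0: "\<And>j. 0 \<le> L j" unfolding L_def by simp
  have La: "0 \<le> \<Lambda>" unfolding \<Lambda>_def using ab R0 L0 by (intro add_nonneg_nonneg mult_nonneg_nonneg) auto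
  define d where "d = e / (\<Lambda> + 1)"
  have d0: "0 < d" unfolding d_def using e La by simp
  show ?thesis
  proof (intro exI[of _ d] conjI d0 allI impI)
    fix N \<tau> \<tau>' assume H: "T + 1 \<le> real N \<and> i + 1 \<le> N \<and> 0 \<le> \<tau> \<and> \<tau> \<le> T \<and> 0 \<le> \<tau>' \<and> \<tau>' \<le> T \<and> \<bar>\<tau> - \<tau>'\<bar> \<le> d"
    define z where "z = fi N \<tau>"
    define z' where "z' = fi N \<tau>'"
    have TN: "T \<le> real N" using H by simp
    have zb: "\<And>j. \<bar>z j\<bar> \<le> R" "\<And>j. \<bar>z' j\<bar> \<le> R" unfolding z_def z'_def R_def
      using fi_comp[of \<tau> T N] fi_comp[of \<tau>' T N] H by (auto simp: abs_le_iff)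
    have dz: "\<And>j. j \<ge> 1 \<Longrightarrow> \<bar>z j - z' j\<bar> \<le> \<bar>\<tau> - \<tau>'\<bar> * L j" unfolding z_def z'_def L_def
      using fi_diff[of \<tau> T \<tau>' N] H by auto
    have e1: "FN N z i - FN N z' i = a (i-1) * (z 1 * z (i-1) - z' 1 * z' (i-1)) - b i * (z i - z' i)
        - a i * (z 1 * z i - z' 1 * z' i) + b (i+1) * (z (i+1) - z' (i+1))"
      using FN_mid_expl[OF i2, of N z] FN_mid_expl[OF i2, of N z'] H by (simp add: algebra_simps)
    have p1: "\<bar>z 1 * z (i-1) - z' 1 * z' (i-1)\<bar> \<le> R * (\<bar>\<tau> - \<tau>'\<bar> * L 1 + \<bar>\<tau> - \<tau>'\<bar> * L (i-1))"
    proof -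
      have "\<bar>z 1 * z (i-1) - z' 1 * z' (i-1)\<bar> \<le> R * (\<bar>z 1 - z' 1\<bar> + \<bar>z (i-1) - z' (i-1)\<bar>)"
        by (rule prod_diff) (use zb in auto)
      also have "\<dots> \<le> R * (\<bar>\<tau> - \<tau>'\<bar> * L 1 + \<bar>\<tau> - \<tau>'\<bar> * L (i-1))"
        using dz[of 1] dz[of "i-1"] i2 R0 by (intro mult_left_mono add_mono) auto
      finally show ?thesis .
    qed
    have p2: "\<bar>z 1 * z i - z' 1 * z' i\<bar> \<le> R * (\<bar>\<tau> - \<tau>'\<bar> * L 1 + \<bar>\<tau> - \<tau>'\<bar> * L i)"
    proof -
      have "\<bar>z 1 * z i - z' 1 * z' i\<bar> \<le> R * (\<bar>z 1 - z' 1\<bar> + \<bar>z i - z' i\<bar>)"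
        by (rule prod_diff) (use zb in auto)
      also have "\<dots> \<le> R * (\<bar>\<tau> - \<tau>'\<bar> * L 1 + \<bar>\<tau> - \<tau>'\<bar> * L i)"
        using dz[of 1] dz[of i] i2 R0 by (intro mult_left_mono add_mono) auto
      finally show ?thesis .
    qed
    have "\<bar>FN N z i - FN N z' i\<bar> \<le> a (i-1) * \<bar>z 1 * z (i-1) - z' 1 * z' (i-1)\<bar> + b i * \<bar>z i - z' i\<bar>
        + a i * \<bar>z 1 * z i - z' 1 * z' i\<bar> + b (i+1) * \<bar>z (i+1) - z' (i+1)\<bar>"
      unfolding e1 by (rule abs_four_bound[OF ab(1) ab(3) ab(2) ab(4)])
    also have "\<dots> \<le> a (i-1) * (R * (\<bar>\<tau> - \<tau>'\<bar> * L 1 + \<bar>\<tau> - \<tau>'\<bar> * L (i-1))) + b i * (\<bar>\<tau> - \<tau>'\<bar> * L i)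
        + a i * (R * (\<bar>\<tau> - \<tau>'\<bar> * L 1 + \<bar>\<tau> - \<tau>'\<bar> * L i)) + b (i+1) * (\<bar>\<tau> - \<tau>'\<bar> * L (i+1))"
    proof -
      have ii: "i \<ge> 1" "i + 1 \<ge> 1" using i2 by auto
      have q1: "a (i-1) * \<bar>z 1 * z (i-1) - z' 1 * z' (i-1)\<bar> \<le> a (i-1) * (R * (\<bar>\<tau> - \<tau>'\<bar> * L 1 + \<bar>\<tau> - \<tau>'\<bar> * L (i-1)))"
        by (rule mult_left_mono[OF p1 ab(1)])
      have q2: "b i * \<bar>z i - z' i\<bar> \<le> b i * (\<bar>\<tau> - \<tau>'\<bar> * L i)" by (rule mult_left_mono[OF dz[OF ii(1)] ab(3)])
      have q3: "a i * \<bar>z 1 * z i - z' 1 * z' i\<bar> \<le> a i * (R * (\<bar>\<tau> - \<tau>'\<bar> * L 1 + \<bar>\<tau> - \<tau>'\<bar> * L i))"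
        by (rule mult_left_mono[OF p2 ab(2)])
      have q4: "b (i+1) * \<bar>z (i+1) - z' (i+1)\<bar> \<le> b (i+1) * (\<bar>\<tau> - \<tau>'\<bar> * L (i+1))"
        by (rule mult_left_mono[OF dz[OF ii(2)] ab(4)])
      show ?thesis using q1 q2 q3 q4 by linarith
    qed
    also have "\<dots> = \<Lambda> * \<bar>\<tau> - \<tau>'\<bar>" unfolding \<Lambda>_def by (simp add: algebra_simps)
    also have "\<dots> \<le> \<Lambda> * d" using H La by (intro mult_left_mono) auto
    also have "\<dots> \<le> e" unfolding d_def using La e by (simp add: field_simps)
    finally show "\<bar>FN N (fi N \<tau>) i - FN N (fi N \<tau>') i\<bar> \<le> e" unfolding z_def z'_def .
  qed
qed


lemma FN_equi_one:
  assumes T0: "0 \<le> T" and e: "0 < e"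
  shows "\<exists>d>0. \<forall>N \<tau> \<tau>'. T + 1 \<le> real N \<and> 1 + 1 \<le> N \<and> 0 \<le> \<tau> \<and> \<tau> \<le> T \<and> 0 \<le> \<tau>' \<and> \<tau>' \<le> T \<and>
      \<bar>\<tau> - \<tau>'\<bar> \<le> d \<longrightarrow> \<bar>FN N (fi N \<tau>) 1 - FN N (fi N \<tau>') 1\<bar> \<le> e"
proof -
  define R where "R = Rb (T+1)"
  define L where "L j = \<bar>Lc j T\<bar>" for j
  define Gt where "Gt = Gb T"
  have R0: "0 \<le> R" unfolding R_def using fi_comp[OF order_refl T0, of "nat \<lceil>T+1\<rceil>" 0] by linarith
  have L0: "\<And>j. 0 \<le> L j" unfolding L_def by simp
  have Gt0: "0 \<le> Gt" unfolding Gt_def using Gb_nn T0 by simp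
  define M where "M = 4 * ((R + 1) * (A + 1) * (Gt + 1)) / e"
  have Mpos: "0 < (R + 1) * (A + 1) * (Gt + 1)" using R0 A0 Gt0 by simp
  have M0: "0 < M" unfolding M_def using Mpos e by simp
  obtain K0 where K0: "K0 \<ge> 1" "\<forall>i\<ge>K0. M * real i powr \<alpha> \<le> g i" using K0_ex[OF M0] by blast
  define Sa where "Sa = (\<Sum>j\<in>{1..<K0}. a j * L j)"
  have Sa0: "0 \<le> Sa" unfolding Sa_def using a_nn L0 by (intro sum_nonneg) auto
  define \<Lambda> where "\<Lambda> = R * Sa + A * R * L 1 + 2 * a 1 * R * L 1"
  have La: "0 \<le> \<Lambda>" unfolding \<Lambda>_def using R0 Sa0 A0 L0 a1_nn by simp
  define d where "d = e / (2 * (\<Lambda> + 1))"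
  have d0: "0 < d" unfolding d_def using e La by simp
  have tailsmall: "R * (2 * A * (Gt / M)) \<le> e / 2"
  proof -
    have "R * A * Gt \<le> (R + 1) * (A + 1) * (Gt + 1)"
      using R0 A0 Gt0 by (intro mult_mono) auto
    hence q: "R * A * Gt / ((R + 1) * (A + 1) * (Gt + 1)) \<le> 1" using Mpos by (simp add: divide_le_eq)
    have "R * (2 * A * (Gt / M)) = (R * A * Gt / ((R + 1) * (A + 1) * (Gt + 1))) * (e / 2)"
      unfolding M_def using e Mpos by (simp add: field_simps)
    also have "\<dots> \<le> 1 * (e / 2)" using q e by (intro mult_right_mono) auto
    finally show ?thesis by simp
  qed
  show ?thesis
  proof (intro exI[of _ d] conjI d0 allI impI)
    fix N \<tau> \<tau>' assume H: "T + 1 \<le> real N \<and> 1 + 1 \<le> N \<and> 0 \<le> \<tau> \<and> \<tau> \<le> T \<and> 0 \<le> \<tau>' \<and> \<tau>' \<le> T \<and> \<bar>\<tau> - \<tau>'\<bar> \<le> d"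
    hence TN1: "T + 1 \<le> real N" and N2: "2 \<le> N" and ta: "0 \<le> \<tau>" "\<tau> \<le> T" and tb: "0 \<le> \<tau>'" "\<tau>' \<le> T"
      and dd: "\<bar>\<tau> - \<tau>'\<bar> \<le> d" by auto
    have TN: "T \<le> real N" using TN1 by simp
    define z where "z = fi N \<tau>"
    define z' where "z' = fi N \<tau>'"
    have zn: "\<And>j. 0 \<le> z j" "\<And>j. 0 \<le> z' j" unfolding z_def z'_def using fi_comp(1) ta tb TN1 by auto
    have zb: "\<And>j. z j \<le> R" "\<And>j. z' j \<le> R" unfolding z_def z'_def R_def using fi_comp(2) ta tb TN1 by auto
    have dz: "\<And>j. j \<ge> 1 \<Longrightarrow> \<bar>z j - z' j\<bar> \<le> \<bar>\<tau> - \<tau>'\<bar> * L j" unfolding z_def z'_def L_def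
      using fi_diff ta tb TN by auto
    define S where "S = (\<Sum>j\<in>{1..N}. a j * z j)"
    define S' where "S' = (\<Sum>j\<in>{1..N}. a j * z' j)"
    have S'b: "S' \<le> A * R"
    proof -
      note fb = fi_bounds[OF tb(1) tb(2) TN1]
      have "\<forall>i. 0 \<le> fi N \<tau>' i" using fb by simp
      from comp_bounds(2)[OF this fb(2) fb(3) fi_supp]
      show ?thesis unfolding S'_def z'_def R_def .
    qed
    have S'0: "0 \<le> S'" unfolding S'_def using a_nn zn by (intro sum_nonneg) auto
    have dS: "\<bar>S - S'\<bar> \<le> Sa * \<bar>\<tau> - \<tau>'\<bar> + 2 * A * (Gt / M)"
    proof -
      define F1 where "F1 = {1..N} \<inter> {..<K0}"
      define F2 where "F2 = {1..N} - {..<K0}"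
      have "S - S' = (\<Sum>j\<in>{1..N}. a j * (z j - z' j))" unfolding S_def S'_def by (simp add: sum_subtractf algebra_simps)
      also have "\<dots> = (\<Sum>j\<in>F1. a j * (z j - z' j)) + (\<Sum>j\<in>F2. a j * (z j - z' j))"
        unfolding F1_def F2_def by (rule sum.Int_Diff) simp
      finally have eS: "S - S' = (\<Sum>j\<in>F1. a j * (z j - z' j)) + (\<Sum>j\<in>F2. a j * (z j - z' j))" .
      have b1: "\<bar>\<Sum>j\<in>F1. a j * (z j - z' j)\<bar> \<le> Sa * \<bar>\<tau> - \<tau>'\<bar>"
      proof -
        have "\<bar>\<Sum>j\<in>F1. a j * (z j - z' j)\<bar> \<le> (\<Sum>j\<in>F1. \<bar>a j * (z j - z' j)\<bar>)" by (rule sum_abs)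
        also have "\<dots> \<le> (\<Sum>j\<in>F1. a j * (\<bar>\<tau> - \<tau>'\<bar> * L j))"
        proof (rule sum_mono)
          fix j assume "j \<in> F1" hence j1: "j \<ge> 1" unfolding F1_def by simp
          show "\<bar>a j * (z j - z' j)\<bar> \<le> a j * (\<bar>\<tau> - \<tau>'\<bar> * L j)"
            unfolding abs_mult using a_nn[OF j1] dz[OF j1] by (simp add: mult_left_mono)
        qed
        also have "\<dots> \<le> (\<Sum>j\<in>{1..<K0}. a j * (\<bar>\<tau> - \<tau>'\<bar> * L j))"
          by (rule sum_mono2) (use a_nn L0 in \<open>auto simp: F1_def\<close>)
        also have "\<dots> = (\<Sum>j\<in>{1..<K0}. a j * L j) * \<bar>\<tau> - \<tau>'\<bar>"
          unfolding sum_distrib_right by (intro sum.cong) auto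
        also have "\<dots> = Sa * \<bar>\<tau> - \<tau>'\<bar>" unfolding Sa_def ..
        finally show ?thesis .
      qed
      have b2: "\<bar>\<Sum>j\<in>F2. a j * (z j - z' j)\<bar> \<le> 2 * A * (Gt / M)"
      proof -
        have F2s: "F2 \<subseteq> {K0..}" unfolding F2_def by auto
        have "\<bar>\<Sum>j\<in>F2. a j * (z j - z' j)\<bar> \<le> (\<Sum>j\<in>F2. \<bar>a j * (z j - z' j)\<bar>)" by (rule sum_abs)
        also have "\<dots> \<le> (\<Sum>j\<in>F2. A * (real j powr \<alpha> * z j) + A * (real j powr \<alpha> * z' j))"
        proof (rule sum_mono)
          fix j assume "j \<in> F2" hence j1: "j \<ge> 1" unfolding F2_def by simp
          have "\<bar>a j * (z j - z' j)\<bar> \<le> A * (real j powr \<alpha> * \<bar>z j - z' j\<bar>)" by (rule a_abs_le[OF j1])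
          also have "\<dots> \<le> A * (real j powr \<alpha> * (z j + z' j))"
            using zn[of j] A0 by (intro mult_left_mono) auto
          finally show "\<bar>a j * (z j - z' j)\<bar> \<le> A * (real j powr \<alpha> * z j) + A * (real j powr \<alpha> * z' j)"
            by (simp add: algebra_simps)
        qed
        also have "\<dots> = A * (\<Sum>j\<in>F2. real j powr \<alpha> * z j) + A * (\<Sum>j\<in>F2. real j powr \<alpha> * z' j)"
          by (simp add: sum.distrib sum_distrib_left)
        also have "\<dots> \<le> A * (Gt / M) + A * (Gt / M)"
        proof (intro add_mono mult_left_mono A0)
          show "(\<Sum>j\<in>F2. real j powr \<alpha> * z j) \<le> Gt / M" unfolding z_def Gt_def
            by (rule tail_gen[OF fi_comp(1)[OF ta TN1] fi_gsum[OF ta TN1] M0 K0(2) F2s]) (simp add: F2_def)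
          show "(\<Sum>j\<in>F2. real j powr \<alpha> * z' j) \<le> Gt / M" unfolding z'_def Gt_def
            by (rule tail_gen[OF fi_comp(1)[OF tb TN1] fi_gsum[OF tb TN1] M0 K0(2) F2s]) (simp add: F2_def)
        qed
        finally show ?thesis by simp
      qed
      show ?thesis unfolding eS using b1 b2 abs_triangle_ineq[of "\<Sum>j\<in>F1. a j * (z j - z' j)" "\<Sum>j\<in>F2. a j * (z j - z' j)"]
        by linarith
    qed
    have eF: "FN N z 1 - FN N z' 1 = - (z 1 * S - z' 1 * S') - a 1 * (z 1 * z 1 - z' 1 * z' 1)"
      using FN_one_expl[of N z] FN_one_expl[of N z'] N2 unfolding S_def S'_def by (simp add: algebra_simps)
    have t1: "\<bar>z 1 * S - z' 1 * S'\<bar> \<le> R * \<bar>S - S'\<bar> + \<bar>z 1 - z' 1\<bar> * (A * R)"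
    proof -
      have "z 1 * S - z' 1 * S' = z 1 * (S - S') + (z 1 - z' 1) * S'" by (simp add: algebra_simps)
      hence "\<bar>z 1 * S - z' 1 * S'\<bar> \<le> \<bar>z 1\<bar> * \<bar>S - S'\<bar> + \<bar>z 1 - z' 1\<bar> * \<bar>S'\<bar>"
        by (metis abs_mult abs_triangle_ineq)
      also have "\<dots> \<le> R * \<bar>S - S'\<bar> + \<bar>z 1 - z' 1\<bar> * (A * R)"
        using zn zb S'b S'0 R0 by (intro add_mono mult_mono) auto
      finally show ?thesis .
    qed
    have t2: "\<bar>z 1 * z 1 - z' 1 * z' 1\<bar> \<le> R * (\<bar>z 1 - z' 1\<bar> + \<bar>z 1 - z' 1\<bar>)"
      by (rule prod_diff) (use zn zb in auto)
    have d1: "\<bar>z 1 - z' 1\<bar> \<le> \<bar>\<tau> - \<tau>'\<bar> * L 1" using dz[of 1] by simp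
    have "\<bar>FN N z 1 - FN N z' 1\<bar> \<le> \<bar>z 1 * S - z' 1 * S'\<bar> + a 1 * \<bar>z 1 * z 1 - z' 1 * z' 1\<bar>"
      unfolding eF using a1_nn abs_triangle_ineq4[of "- (z 1 * S - z' 1 * S')" "a 1 * (z 1 * z 1 - z' 1 * z' 1)"]
      by (simp add: abs_mult)
    also have "\<dots> \<le> (R * \<bar>S - S'\<bar> + \<bar>z 1 - z' 1\<bar> * (A * R)) + a 1 * (R * (\<bar>z 1 - z' 1\<bar> + \<bar>z 1 - z' 1\<bar>))"
      using t1 t2 a1_nn by (intro add_mono mult_left_mono) auto
    also have "\<dots> \<le> (R * (Sa * \<bar>\<tau> - \<tau>'\<bar> + 2 * A * (Gt / M)) + (\<bar>\<tau> - \<tau>'\<bar> * L 1) * (A * R))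
        + a 1 * (R * ((\<bar>\<tau> - \<tau>'\<bar> * L 1) + (\<bar>\<tau> - \<tau>'\<bar> * L 1)))"
    proof -
      have u1: "R * \<bar>S - S'\<bar> \<le> R * (Sa * \<bar>\<tau> - \<tau>'\<bar> + 2 * A * (Gt / M))" by (rule mult_left_mono[OF dS R0])
      have AR: "0 \<le> A * R" using A0 R0 by simp
      have u2: "\<bar>z 1 - z' 1\<bar> * (A * R) \<le> (\<bar>\<tau> - \<tau>'\<bar> * L 1) * (A * R)" by (rule mult_right_mono[OF d1 AR])
      have u3: "R * (\<bar>z 1 - z' 1\<bar> + \<bar>z 1 - z' 1\<bar>) \<le> R * ((\<bar>\<tau> - \<tau>'\<bar> * L 1) + (\<bar>\<tau> - \<tau>'\<bar> * L 1))"
        using d1 R0 by (intro mult_left_mono add_mono) auto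
      have u4: "a 1 * (R * (\<bar>z 1 - z' 1\<bar> + \<bar>z 1 - z' 1\<bar>)) \<le> a 1 * (R * ((\<bar>\<tau> - \<tau>'\<bar> * L 1) + (\<bar>\<tau> - \<tau>'\<bar> * L 1)))"
        by (rule mult_left_mono[OF u3 a1_nn])
      show ?thesis using u1 u2 u4 by linarith
    qed
    also have "\<dots> = \<Lambda> * \<bar>\<tau> - \<tau>'\<bar> + R * (2 * A * (Gt / M))" unfolding \<Lambda>_def by (simp add: algebra_simps)
    also have "\<Lambda> * \<bar>\<tau> - \<tau>'\<bar> \<le> e / 2"
    proof -
      have "\<Lambda> * \<bar>\<tau> - \<tau>'\<bar> \<le> \<Lambda> * d" using dd La by (intro mult_left_mono) auto
      also have "\<dots> \<le> e / 2" unfolding d_def using La e by (simp add: field_simps)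
      finally show ?thesis .
    qed
    finally show "\<bar>FN N (fi N \<tau>) 1 - FN N (fi N \<tau>') 1\<bar> \<le> e" unfolding z_def z'_def using tailsmall by simp
  qed
qed


lemma FN_equi:
  assumes T0: "0 \<le> T" and i1: "i \<ge> 1" and e: "0 < e"
  shows "\<exists>d>0. \<forall>N \<tau> \<tau>'. T + 1 \<le> real N \<and> i + 1 \<le> N \<and> 0 \<le> \<tau> \<and> \<tau> \<le> T \<and> 0 \<le> \<tau>' \<and> \<tau>' \<le> T \<and>
      \<bar>\<tau> - \<tau>'\<bar> \<le> d \<longrightarrow> \<bar>FN N (fi N \<tau>) i - FN N (fi N \<tau>') i\<bar> \<le> e"
proof (cases "i = 1")
  case True thus ?thesis using FN_equi_one[OF T0 e] by simp
next
  case False thus ?thesis using FN_equi_mid[OF T0 _ e] i1 by simp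
qed

lemma xs_fi: "xs N m = fi N (real m * hN N)"
  by (rule ext) (simp add: fi_grid)

lemma Cl_deriv:
  assumes s0: "0 \<le> s" and i1: "i \<ge> 1"
  shows "((\<lambda>\<tau>. Cl \<tau> i) has_real_derivative G i s) (at s within {0..})"
  unfolding has_field_derivative_iff tendsto_iff
proof (intro allI impI)
  fix e :: real assume e: "0 < e"
  define T where "T = s + 1"
  have T0: "0 \<le> T" unfolding T_def using s0 by simp
  obtain d0 where d0: "d0 > 0" and eq: "\<forall>N \<tau> \<tau>'. T + 1 \<le> real N \<and> i + 1 \<le> N \<and> 0 \<le> \<tau> \<and> \<tau> \<le> T \<and> 0 \<le> \<tau>' \<and> \<tau>' \<le> T \<and>
      \<bar>\<tau> - \<tau>'\<bar> \<le> d0 \<longrightarrow> \<bar>FN N (fi N \<tau>) i - FN N (fi N \<tau>') i\<bar> \<le> e/2"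
    using FN_equi[OF T0 i1, of "e/2"] e by auto
  have eqI: "\<And>N \<tau> \<tau>'. T + 1 \<le> real N \<and> i + 1 \<le> N \<and> 0 \<le> \<tau> \<and> \<tau> \<le> T \<and> 0 \<le> \<tau>' \<and> \<tau>' \<le> T \<and>
      \<bar>\<tau> - \<tau>'\<bar> \<le> d0 \<Longrightarrow> \<bar>FN N (fi N \<tau>) i - FN N (fi N \<tau>') i\<bar> \<le> e/2"
    using eq by blast
  define d where "d = min (1/2) (d0/2)"
  have dpos: "0 < d" unfolding d_def using d0 by simp
  show "\<forall>\<^sub>F y in at s within {0..}. dist ((Cl y i - Cl s i) / (y - s)) (G i s) < e"
    unfolding eventually_at
  proof (intro exI[of _ d] conjI dpos ballI impI)
    fix y :: real assume y0: "y \<in> {0..}" and yd: "y \<noteq> s \<and> dist y s < d"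
    have y0': "0 \<le> y" using y0 by simp
    have ys: "\<bar>y - s\<bar> < d" using yd by (simp add: dist_real_def)
    have yne: "y - s \<noteq> 0" using yd by simp
    have claim: "\<bar>fi N y i - fi N s i - (y - s) * FN N (fi N s) i\<bar> \<le> \<bar>y - s\<bar> * (e/2)"
      if N: "T + 1 \<le> real N" "i + 1 \<le> N" "hN N \<le> d0/2" for N
    proof -
      define c where "c = FN N (fi N s) i"
      define lo where "lo = min y s"
      define hi where "hi = max y s"
      have lo0: "0 \<le> lo" unfolding lo_def using s0 y0' by simp
      have lohi: "lo \<le> hi" unfolding lo_def hi_def by simp
      have dh: "d \<le> 1/2" unfolding d_def by simp
      have "y - s \<le> \<bar>y - s\<bar>" by simp
      hence "y \<le> s + 1" using ys dh by linarith
      hence hiT: "hi \<le> T" unfolding hi_def T_def by simp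
      have "\<bar>fi N hi i - fi N lo i - (hi - lo) * c\<bar> \<le> (hi - lo) * (e/2)"
      proof (rule fi_incr[OF lo0 lohi])
        fix m assume m: "nf N lo \<le> m" "m \<le> nf N hi"
        define tm where "tm = real m * hN N"
        have hp: "0 < hN N" by (rule hN_pos)
        have "real (nf N lo) * hN N \<le> tm" unfolding tm_def using m hp by (intro mult_right_mono) auto
        moreover have "lo < (real (nf N lo) + 1) * hN N" using nf_props(2)[OF lo0] .
        ultimately have tm1: "lo - hN N < tm" by (simp add: algebra_simps)
        have "tm \<le> real (nf N hi) * hN N" unfolding tm_def using m hp by (intro mult_right_mono) auto
        also have "\<dots> \<le> hi" using nf_props(1)[of hi N] lo0 lohi by simp
        finally have tm2: "tm \<le> hi" .
        have tm0: "0 \<le> tm" unfolding tm_def using hp by simp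
        have dist1: "\<bar>tm - s\<bar> \<le> d0"
        proof -
          have a1: "y - s \<le> \<bar>y - s\<bar>" "s - y \<le> \<bar>y - s\<bar>" by auto
          have "s - d < lo" unfolding lo_def using a1 ys by (cases "y \<le> s") auto
          hence b1: "s - d - hN N < tm" using tm1 by simp
          have "hi < s + d" unfolding hi_def using a1 ys dpos by (cases "y \<le> s") auto
          hence b2: "tm < s + d" using tm2 by simp
          have "d \<le> d0/2" unfolding d_def by simp
          thus ?thesis using b1 b2 N(3) unfolding abs_le_iff by linarith
        qed
        have sT: "s \<le> T" unfolding T_def by simp
        have "T + 1 \<le> real N \<and> i + 1 \<le> N \<and> 0 \<le> tm \<and> tm \<le> T \<and> 0 \<le> s \<and> s \<le> T \<and> \<bar>tm - s\<bar> \<le> d0"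
          using N tm0 tm2 hiT dist1 s0 sT by simp
        hence "\<bar>FN N (fi N tm) i - FN N (fi N s) i\<bar> \<le> e/2" by (rule eqI)
        thus "\<bar>FN N (xs N m) i - c\<bar> \<le> e/2" unfolding c_def xs_fi tm_def[symmetric] .
      qed
      thus ?thesis unfolding c_def
      proof (cases "s \<le> y")
        case True
        hence "hi = y" "lo = s" unfolding hi_def lo_def by auto
        thus ?thesis using \<open>\<bar>fi N hi i - fi N lo i - (hi - lo) * c\<bar> \<le> (hi - lo) * (e/2)\<close> True
          unfolding c_def by simp
      next
        case False
        hence "hi = s" "lo = y" unfolding hi_def lo_def by auto
        moreover have "\<bar>fi N s i - fi N y i - (s - y) * c\<bar> = \<bar>fi N y i - fi N s i - (y - s) * c\<bar>"
          by (simp add: abs_minus_commute algebra_simps)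
        ultimately show ?thesis using \<open>\<bar>fi N hi i - fi N lo i - (hi - lo) * c\<bar> \<le> (hi - lo) * (e/2)\<close> False
          unfolding c_def by simp
      qed
    qed
    have lim: "(\<lambda>n. \<bar>fi (rr n) y i - fi (rr n) s i - (y - s) * FN (rr n) (fi (rr n) s) i\<bar>)
        \<longlonglongrightarrow> \<bar>Cl y i - Cl s i - (y - s) * G i s\<bar>"
      by (intro tendsto_intros Cl_lim FN_lim s0 y0' i1)
    have bnd: "\<bar>Cl y i - Cl s i - (y - s) * G i s\<bar> \<le> \<bar>y - s\<bar> * (e/2)"
    proof (rule LIMSEQ_le_const2[OF lim])
      obtain M where M: "\<forall>n\<ge>M. max (T + 1) (max (real i + 1) (2 / d0)) \<le> real (rr n)" using large by blast
      show "\<exists>M. \<forall>n\<ge>M. \<bar>fi (rr n) y i - fi (rr n) s i - (y - s) * FN (rr n) (fi (rr n) s) i\<bar> \<le> \<bar>y - s\<bar> * (e/2)"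
      proof (intro exI[of _ M] allI impI claim)
        fix n assume n: "M \<le> n"
        hence r: "T + 1 \<le> real (rr n)" "real i + 1 \<le> real (rr n)" "2 / d0 \<le> real (rr n)" using M by auto
        show "T + 1 \<le> real (rr n)" using r by simp
        have "real (i + 1) \<le> real (rr n)" using r by simp
        thus "i + 1 \<le> rr n" by (simp only: of_nat_le_iff)
        have "hN (rr n) \<le> 1 / (real (rr n) + 1)" by (rule hN_le)
        also have "\<dots> \<le> 1 / (2 / d0)" using r d0 by (intro divide_left_mono) auto
        also have "\<dots> = d0 / 2" by simp
        finally show "hN (rr n) \<le> d0 / 2" .
      qed
    qed
    have "(Cl y i - Cl s i) / (y - s) - G i s = (Cl y i - Cl s i - (y - s) * G i s) / (y - s)"
      using yne by (simp add: field_simps)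
    hence "\<bar>(Cl y i - Cl s i) / (y - s) - G i s\<bar> = \<bar>Cl y i - Cl s i - (y - s) * G i s\<bar> / \<bar>y - s\<bar>"
      by (simp add: abs_divide)
    also have "\<dots> \<le> e / 2"
    proof -
      have yp: "0 < \<bar>y - s\<bar>" using yne by simp
      have "\<bar>Cl y i - Cl s i - (y - s) * G i s\<bar> \<le> (e / 2) * \<bar>y - s\<bar>" using bnd by (simp add: mult.commute)
      thus ?thesis using pos_divide_le_eq[OF yp] by simp
    qed
    also have "\<dots> < e" using e by simp
    finally show "dist ((Cl y i - Cl s i) / (y - s)) (G i s) < e" by (simp add: dist_real_def)
  qed
qed

end

lemma cont_on_from_within:
  fixes f :: "real \<Rightarrow> real"
  assumes "\<And>x. 0 \<le> x \<Longrightarrow> (f \<longlongrightarrow> f x) (at x within {0..})"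
  shows "continuous_on {0..t} f"
  unfolding continuous_on_eq_continuous_within continuous_within
proof
  fix x assume x: "x \<in> {0..t}"
  hence "(f \<longlongrightarrow> f x) (at x within {0..})" using assms by simp
  thus "(f \<longlongrightarrow> f x) (at x within {0..t})" by (rule tendsto_within_subset) auto
qed

context scheme begin

lemma G_cont:
  assumes s0: "0 \<le> s0" and i1: "i \<ge> 1"
  shows "((\<lambda>s. G i s) \<longlongrightarrow> G i s0) (at s0 within {0..})"
proof (cases "i = 1")
  case True
  have e: "\<And>s. G i s = lam - (Cl s 1 * asum a (Cl s) + a 1 * (Cl s 1)^2)" using True by (simp add: G_def Hf_def)
  show ?thesis unfolding e by (intro tendsto_intros Cl_comp_cont asum_cont s0) auto
next
  case False
  hence e: "\<And>s. G i s = a (i-1) * Cl s 1 * Cl s (i-1) - b (i-1+1) * Cl s (i-1+1) - (a i * Cl s 1 * Cl s i - b (i+1) * Cl s (i+1))"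
    by (simp add: G_def flux_def)
  have i2: "i - 1 \<ge> 1" "i - 1 + 1 \<ge> 1" using False i1 by auto
  show ?thesis unfolding e by (intro tendsto_intros Cl_comp_cont s0 i2 i1) auto
qed

lemma Hf_cont: "0 \<le> s0 \<Longrightarrow> (Hf \<longlongrightarrow> Hf s0) (at s0 within {0..})"
  unfolding Hf_def by (intro tendsto_intros Cl_comp_cont asum_cont) auto

lemma FTC_mid:
  assumes t0: "0 \<le> t" and i2: "i \<ge> 2"
  shows "Cl t i = Cl 0 i + (LINT s:{0..t}|lborel. flux a b (Cl s) (i - 1) - flux a b (Cl s) i)"
proof -
  have i1: "i \<ge> 1" using i2 by simp
  have Ge: "\<And>s. G i s = flux a b (Cl s) (i - 1) - flux a b (Cl s) i" using i2 by (simp add: G_def)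
  have "(LBINT s=(0::real)..t. G i s) = Cl t i - Cl 0 i"
  proof (rule interval_integral_FTC_finite[where F="\<lambda>\<tau>. Cl \<tau> i" and f="G i" and a=0 and b=t, simplified])
    show "continuous_on {min 0 t..max 0 t} (G i)" using t0 G_cont[OF _ i1] by (simp add: cont_on_from_within)
    fix x assume "min 0 t \<le> x" "x \<le> max 0 t"
    hence x: "0 \<le> x" "x \<le> t" using t0 by auto
    have "((\<lambda>\<tau>. Cl \<tau> i) has_real_derivative G i x) (at x within {0..})" using Cl_deriv[OF x(1) i1] .
    hence "((\<lambda>\<tau>. Cl \<tau> i) has_real_derivative G i x) (at x within {min 0 t..max 0 t})"
      by (rule DERIV_subset) (use t0 in auto)
    thus "((\<lambda>\<tau>. Cl \<tau> i) has_vector_derivative G i x) (at x within {min 0 t..max 0 t})"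
      by (simp add: has_real_derivative_iff_has_vector_derivative)
  qed
  hence "(LINT s:{0..t}|lborel. G i s) = Cl t i - Cl 0 i" using interval_integral_Icc[OF t0, of "G i"] by linarith
  thus ?thesis unfolding Ge by simp
qed

lemma FTC_one:
  assumes t0: "0 \<le> t"
  shows "Cl t 1 = Cl 0 1 + lam * t - (LINT s:{0..t}|lborel. Cl s 1 * asum a (Cl s) + a 1 * (Cl s 1)\<^sup>2)"
proof -
  have "(LBINT s=(0::real)..t. Hf s) = (lam * t - Cl t 1) - (lam * 0 - Cl 0 1)"
  proof (rule interval_integral_FTC_finite[where F="\<lambda>\<tau>. lam * \<tau> - Cl \<tau> 1" and f="Hf" and a=0 and b=t])
    show "continuous_on {min 0 t..max 0 t} Hf" using t0 Hf_cont by (simp add: cont_on_from_within)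
    fix x assume "min 0 t \<le> x" "x \<le> max 0 t"
    hence x: "0 \<le> x" "x \<le> t" using t0 by auto
    have d1: "((\<lambda>\<tau>. Cl \<tau> 1) has_real_derivative G 1 x) (at x within {0..})" using Cl_deriv[OF x(1)] by simp
    have dl: "((\<lambda>\<tau>. lam * \<tau>) has_real_derivative lam * 1) (at x within {0..})"
      by (rule DERIV_cmult[OF DERIV_ident])
    have "((\<lambda>\<tau>. lam * \<tau> - Cl \<tau> 1) has_real_derivative lam * 1 - G 1 x) (at x within {0..})"
      by (rule DERIV_diff[OF dl d1])
    moreover have "lam * 1 - G 1 x = Hf x" by (simp add: G_def)
    ultimately have "((\<lambda>\<tau>. lam * \<tau> - Cl \<tau> 1) has_real_derivative Hf x) (at x within {0..})" by simp
    hence "((\<lambda>\<tau>. lam * \<tau> - Cl \<tau> 1) has_real_derivative Hf x) (at x within {min 0 t..max 0 t})"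
      by (rule DERIV_subset) (use t0 in auto)
    thus "((\<lambda>\<tau>. lam * \<tau> - Cl \<tau> 1) has_vector_derivative Hf x) (at x within {min 0 t..max 0 t})"
      by (simp add: has_real_derivative_iff_has_vector_derivative)
  qed
  hence "(LINT s:{0..t}|lborel. Hf s) = lam * t - Cl t 1 + Cl 0 1" using interval_integral_Icc[OF t0, of Hf] by linarith
  thus ?thesis unfolding Hf_def by simp
qed

lemma asum_integrable: "0 \<le> t \<Longrightarrow> set_integrable lborel {0..t} (\<lambda>s. asum a (Cl s))"
  unfolding set_integrable_def
  by (rule borel_integrable_compact) (auto intro: cont_on_from_within asum_cont)

end

theorem mainTheorem1:
  fixes \<alpha> lam :: real and a b Cinit :: "nat \<Rightarrow> real" and U :: "real \<Rightarrow> real"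
  assumes alpha: "0 \<le> \<alpha>" "\<alpha> \<le> 1"
    and lam: "lam \<ge> 0"
    and H1: "\<exists>A\<ge>0. \<forall>i\<ge>1. 0 \<le> a i \<and> a i \<le> A * real i powr \<alpha>"
    and H1b: "\<forall>i\<ge>1. b i \<ge> 0"
    and init: "in_Xplus \<alpha> Cinit"
    and U: "K1 U \<or> K2 U"
    and Uinit: "(\<lambda>i. U (real i powr \<alpha>) * Cinit i) summable_on {1..}"
  shows "\<exists>C :: real \<Rightarrow> nat \<Rightarrow> real.
           (\<forall>i\<ge>1. C 0 i = Cinit i) \<and>
           is_solution_global lam a b C \<and>
           (\<forall>t\<ge>0. in_Xplus \<alpha> (C t)) \<and>
           (\<forall>t0\<ge>0. ((\<lambda>t. Xnorm \<alpha> (\<lambda>k. C t k - C t0 k)) \<longlongrightarrow> 0) (at t0 within {0..})) \<and>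
           (\<forall>T>0. (\<forall>t\<in>{0..T}. (\<lambda>i. U (real i powr \<alpha>) * C t i) summable_on {1..}) \<and>
                  (\<exists>M. \<forall>t\<in>{0..T}. (\<Sum>\<^sub>\<infinity>i\<in>{1..}. U (real i powr \<alpha>) * C t i) \<le> M))"
proof -
  obtain A where A0: "A \<ge> 0" and Ha: "\<forall>i\<ge>1. 0 \<le> a i \<and> a i \<le> A * real i powr \<alpha>" using H1 by blast
  have cnn: "\<forall>i\<ge>1. 0 \<le> Cinit i" using init by (simp add: in_Xplus_def)
  have csum: "(\<lambda>i. real i powr \<alpha> * Cinit i) summable_on {1..}"
  proof -
    have s1: "(\<lambda>k. real k powr \<alpha> * \<bar>Cinit k\<bar>) summable_on {1..}" using init by (simp add: in_Xplus_def in_X_def)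
    have "\<And>k. k \<in> {1..} \<Longrightarrow> real k powr \<alpha> * \<bar>Cinit k\<bar> = real k powr \<alpha> * Cinit k" using cnn by simp
    hence "(\<lambda>k. real k powr \<alpha> * \<bar>Cinit k\<bar>) summable_on {1..} \<longleftrightarrow> (\<lambda>i. real i powr \<alpha> * Cinit i) summable_on {1..}"
      by (rule summable_on_cong)
    thus ?thesis using s1 by simp
  qed
  obtain g G0 where gp: "\<forall>i\<ge>1. 1 \<le> g i \<and> real i powr \<alpha> \<le> g i \<and> g i \<le> g (i+1) \<and> (g (i+1) - g i) * a i \<le> (2*A) * g i"
    and gs: "\<forall>N. (\<Sum>i\<in>{1..N}. g i * Cinit i) \<le> G0" and gsup: "\<forall>M. \<exists>K. \<forall>i\<ge>K. M * real i powr \<alpha> \<le> g i"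
    using superweight[OF alpha(1) alpha(2) A0 Ha cnn csum] by blast
  interpret S: scheme \<alpha> lam A "2*A" G0 a b Cinit g
  proof
    show "0 \<le> \<alpha>" "\<alpha> \<le> 1" "0 \<le> lam" "0 \<le> A" "0 \<le> 2 * A" using alpha lam A0 by auto
    fix i :: nat
    show "i \<ge> 1 \<Longrightarrow> 0 \<le> a i" using Ha by simp
    show "i \<ge> 1 \<Longrightarrow> a i \<le> A * real i powr \<alpha>" using Ha by simp
    show "i \<ge> 1 \<Longrightarrow> 0 \<le> b i" using H1b by simp
    show "i \<ge> 1 \<Longrightarrow> 0 \<le> Cinit i" using cnn by simp
    show "i \<ge> 1 \<Longrightarrow> 1 \<le> g i" using gp by simp
    show "i \<ge> 1 \<Longrightarrow> real i powr \<alpha> \<le> g i" using gp by simp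
    show "i \<ge> 1 \<Longrightarrow> g i \<le> g (i+1)" using gp by simp
    show "i \<ge> 1 \<Longrightarrow> (g (i+1) - g i) * a i \<le> (2*A) * g i" using gp by simp
  next
    fix N :: nat show "(\<Sum>i\<in>{1..N}. g i * Cinit i) \<le> G0" using gs by simp
  next
    fix M :: real show "\<exists>K. \<forall>i\<ge>K. M * real i powr \<alpha> \<le> g i" using gsup by simp
  qed
  obtain K where K0: "K \<ge> 0" and uK: "\<forall>i\<ge>1. 0 \<le> U (real i powr \<alpha>) \<and> U (real i powr \<alpha>) \<le> U (real (i+1) powr \<alpha>) \<and>
            (U (real (i+1) powr \<alpha>) - U (real i powr \<alpha>)) * a i \<le> K * U (real i powr \<alpha>)"
    using U_weight[OF U alpha(1) alpha(2) A0 Ha] by blast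
  define u where "u i = U (real i powr \<alpha>)" for i
  define U0 where "U0 = infsum (\<lambda>i. U (real i powr \<alpha>) * Cinit i) {1..}"
  have u0: "\<And>i. i \<ge> 1 \<Longrightarrow> 0 \<le> u i" and um: "\<And>i. i \<ge> 1 \<Longrightarrow> u i \<le> u (i+1)"
    and uKK: "\<And>i. i \<ge> 1 \<Longrightarrow> (u (i+1) - u i) * a i \<le> K * u i" using uK unfolding u_def by auto
  have uinit: "\<And>N. (\<Sum>i\<in>{2..N}. u i * Cinit i) \<le> U0"
  proof -
    fix N :: nat
    show "(\<Sum>i\<in>{2..N}. u i * Cinit i) \<le> U0" unfolding U0_def u_def
      by (rule finite_sum_le_infsum[OF Uinit]) (use u0 cnn u_def in \<open>auto intro!: mult_nonneg_nonneg\<close>)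
  qed
  define C where "C = S.Cl"
  have c1: "\<forall>i\<ge>1. C 0 i = Cinit i" unfolding C_def using S.Cl_0 by simp
  have c2: "is_solution_global lam a b C"
    unfolding is_solution_global_def
  proof (intro conjI allI impI ballI)
    fix t i :: real show "0 \<le> t \<Longrightarrow> 1 \<le> i \<Longrightarrow> 0 \<le> C t i" for i :: nat unfolding C_def by (rule S.Cl_nn)
  next
    fix t :: real assume t: "0 < t"
    hence t0: "0 \<le> t" by simp
    show "\<And>i. 1 \<le> i \<Longrightarrow> continuous_on {0..t} (\<lambda>s. C s i)"
      unfolding C_def by (rule cont_on_from_within) (rule S.Cl_comp_cont)
    show "\<And>s. s \<in> {0..t} \<Longrightarrow> (\<lambda>j. a j * C s j) summable_on {1..}"
      unfolding C_def by (rule S.Cl_a_summable) simp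
    show "set_integrable lborel {0..t} (\<lambda>s. asum a (C s))" unfolding C_def by (rule S.asum_integrable[OF t0])
    show "C t 1 = C 0 1 + lam * t - (LINT s:{0..t}|lborel. C s 1 * asum a (C s) + a 1 * (C s 1)\<^sup>2)"
      unfolding C_def by (rule S.FTC_one[OF t0])
    show "\<And>i. 2 \<le> i \<Longrightarrow> C t i = C 0 i + (LINT s:{0..t}|lborel. flux a b (C s) (i - 1) - flux a b (C s) i)"
      unfolding C_def by (rule S.FTC_mid[OF t0])
  qed
  have c3: "\<forall>t\<ge>0. in_Xplus \<alpha> (C t)"
    unfolding C_def in_Xplus_def in_X_def using S.Cl_inX(1) S.Cl_nn by auto
  have c4: "\<forall>t0\<ge>0. ((\<lambda>t. Xnorm \<alpha> (\<lambda>k. C t k - C t0 k)) \<longlongrightarrow> 0) (at t0 within {0..})"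
    unfolding C_def using S.Cl_cont by auto
  have c5: "\<forall>T>0. (\<forall>t\<in>{0..T}. (\<lambda>i. U (real i powr \<alpha>) * C t i) summable_on {1..}) \<and>
                  (\<exists>M. \<forall>t\<in>{0..T}. (\<Sum>\<^sub>\<infinity>i\<in>{1..}. U (real i powr \<alpha>) * C t i) \<le> M)"
  proof (intro allI impI conjI)
    fix T :: real assume T: "0 < T"
    define MU where "MU = u 1 * S.Bd (T+1) + S.MB u K U0 (T+1)"
    have bnd: "sum (\<lambda>i. U (real i powr \<alpha>) * C t i) F \<le> MU" if t: "t \<in> {0..T}" and F: "finite F" for t F
      unfolding MU_def C_def u_def[symmetric]
      by (rule S.Cl_wsum[OF u0 um uKK K0 uinit _ _ F]) (use t in auto)
    have nn: "0 \<le> U (real i powr \<alpha>) * C t i" if "t \<in> {0..T}" "i \<in> {1..}" for t i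
      using u0[of i] S.Cl_nn[of t i] that unfolding u_def C_def by simp
    show "\<forall>t\<in>{0..T}. (\<lambda>i. U (real i powr \<alpha>) * C t i) summable_on {1..}"
    proof
      fix t assume t: "t \<in> {0..T}"
      show "(\<lambda>i. U (real i powr \<alpha>) * C t i) summable_on {1..}"
        by (rule summable_bdd(1)[OF nn[OF t] bnd[OF t]])
    qed
    show "\<exists>M. \<forall>t\<in>{0..T}. (\<Sum>\<^sub>\<infinity>i\<in>{1..}. U (real i powr \<alpha>) * C t i) \<le> M"
    proof (intro exI[of _ MU] ballI)
      fix t assume t: "t \<in> {0..T}"
      show "(\<Sum>\<^sub>\<infinity>i\<in>{1..}. U (real i powr \<alpha>) * C t i) \<le> MU"
        by (rule summable_bdd(2)[OF nn[OF t] bnd[OF t]])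
    qed
  qed
  show ?thesis by (rule exI[of _ C]) (intro conjI c1 c2 c3 c4 c5)
qed

end
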